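(* Let $P$ be any multiprogram in which each process is a single-threaded program accessing read/write variables from a set $V$, and let $K=\{V_1,\dots,V_m\}$ be any partition of a subset of $V$. Let $L(K)=\{1,\dots,m\}$. Then each of the two transformations $\mathrm{SWFR}$ and $\mathrm{FWSR}$ (described in the context) correctly implements the partition consistency model $\mathrm{PC}(K)$ on the partial-order broadcast model $\mathrm{POB}(L(K))$; i.e., for every finite computation $\widehat C$ of the transformed multiprogram that satisfies $\mathrm{POB}(L(K))$ and in which every transformed operation has completed, the interpretation $C$ of $\widehat C$ satisfies $\mathrm{PC}(K)$.
   Context: Framework. A thread issues a sequence of operation invocations (its program order). A process is a finite collection of threads; a multiprogram is a finite collection of processes. A computation of a multiprogram is obtained by completing every invocation with an arbitrary response; it is thus one sequence of completed operations per thread. $O_C$ is the set of operations of computation $C$; $O_C|p$ is the set of operations of process $p$; $O_C|\mathrm{wrts}$ is the set of all write operations; $O_C|\mathrm{wrts}(S)$ is the set of writes to variables in $S$. Program order $\to_{\mathrm{prog}}$ is the union of the per-thread total orders. A memory consistency model is a predicate on computations. Validity: a sequence of reads/writes on a variable is valid if each read returns the value of the most recent preceding write to that variable in the sequence (or the initial value if none); a sequence of operations on several objects is valid if its restriction to each object is valid. For broadcast objects, a sequence of bcast/deliver operations is valid if no deliver precedes its corresponding bcast (the bcast need not appear in the sequence) and no particular deliver occurs more than once. For relations $R,T$ and a set $A$: $\mathrm{Extends}[A,R,T]$ means $\forall a_1,a_2\in A: a_1 T a_2 \Rightarrow a_1 R a_2$; $\mathrm{Agree}[A,R,T]$ means $\forall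 a_1,a_2\in A: a_1 R a_2 \Leftrightarrow a_1 T a_2$. Partition consistency: for a partition $K=\{V_1,\dots,V_m\}$ of a subset of the shared variables, $\mathrm{PC}(K)(C)$ holds iff there exist, for every process $p$, a valid total order $\to_{L_p}$ on $O_C|p\cup O_C|\mathrm{wrts}$ such that for all $p$, $\mathrm{Extends}[O_C|p\cup O_C|\mathrm{wrts},\to_{L_p},\to_{\mathrm{prog}}]$, and for all $p,q$ and $i\in[1,m]$, $\mathrm{Agree}[O_C|\mathrm{wrts}(V_i),\to_{L_p},\to_{L_q}]$. Partial-order broadcast model: processes are multithreaded; threads of the same process share local variables; distinct processes communicate via unique update objects with operations $\mathrm{bcast}(u,l)$ (broadcast update $u$ with label $l\in L\cup\{\bot\}$, $\bot$ meaning unlabeled) and $\mathrm{deliver}$ returning some $(u,l)$. Define $x\to_{\mathrm{delOrder}} y$ iff $x=\mathrm{deliver}(u_1,l_1)$, $y=\mathrm{deliver}(u_2,l_2)$ and $\mathrm{bcast}(u_1,l_1)\to_{\mathrm{prog}}\mathrm{bcast}(u_2,l_2)$. $O_C|\mathrm{delivers}(l)$ is the set of delivers returning an update with label $l\neq\bot$. $\mathrm{POB}(L)(C)$ holds iff there exist, for each process $p$, a valid total order $\to_{L_p}$ on $O_C|p$ with $\mathrm{Extends}[O_C|p,\to_{L_p},\to_{\mathrm{prog}_p}\cup\to_{\mathrm{delOrder}}]$ for all $p$, $\mathrm{Agree}[O_C|\mathrm{delivers}(l),\to_{L_p},\to_{L_q}]$ for all $p,q$ and $l\in L$, and for every $p$: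 $\mathrm{bcast}(m,l)\in O_C$ iff $\mathrm{deliver}(m,l)\in O_C|p$. Correct implementation: a transformation $\tau$ maps a multiprogram $P$ to a target multiprogram $\tau(P)$, replacing each specified operation invocation by a target subroutine that returns a response (and possibly adding new threads). A computation $\widehat C$ of $\tau(P)$ is interpreted as the computation $C$ of $P$ in which each specified operation receives the response returned by its subroutine. $\tau$ correctly implements model $MC$ on target model $\widehat{MC}$ if, for every admissible $P$, the interpretation of every (finite, with all subroutines completed) computation of $\tau(P)$ satisfying $\widehat{MC}$ satisfies $MC$. The transformations. Each specified process $p$ becomes a target process $\widehat p$ with a main thread $\widehat p.m$ and a delivery thread $\widehat p.d$, sharing local variables: a replica $\mathrm{Memory}[\widehat p].x$ for each $x\in V$ (initially the initial value of $x$), and counters writes-requested and writes-processed (initially 0). In $\widehat p.m$: a read of $x$ returns $\mathrm{Memory}[\widehat p].x$; a write $\mathrm{write}(x,v)$ increments writes-requested, then performs $\mathrm{bcast}([x,v,\widehat p],i)$ if $x\in V_i$ for some $V_i\in K$, and $\mathrm{bcast}([x,v,\widehat p],\bot)$ otherwise. The procedure WaitWritesComplete busy-waits while writes-processed $<$ writes-requested. In SWFR, WaitWritesComplete is called at the end of every write; in FWSR it is instead called at the beginning of every read. The thread $\widehat p.d$ loops forever: perform a deliver returning $([x,v,\mathit{source}],l)$, set $\mathrm{Memory}[\widehat p].x\gets v$, and if $\mathit{source}=\widehat p$ increment writes-processed. *)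

theory Defs
  imports Main
begin

datatype ('var,'val) inv = RdInv 'var | WrInv 'var 'val

fun inv_var :: "('var,'val) inv \<Rightarrow> 'var" where
  "inv_var (RdInv x) = x"
| "inv_var (WrInv x v) = x"

datatype ('var,'val) sop = SRead 'var 'val | SWrite 'var 'val

fun sop_var :: "('var,'val) sop \<Rightarrow> 'var" where
  "sop_var (SRead x v) = x"
| "sop_var (SWrite x v) = x"

fun is_swrite :: "('var,'val) sop \<Rightarrow> bool" where
  "is_swrite (SRead x v) = False"
| "is_swrite (SWrite x v) = True"

text \<open>A total order on a finite set of operations is represented by a duplicate-free list.\<close>
definition before :: "'a list \<Rightarrow> 'a \<Rightarrow> 'a \<Rightarrow> bool" where
  "before xs a b \<longleftrightarrow> (\<exists>i j. i < j \<and> j < length xs \<and> xs ! i = a \<and> xs ! j = b)"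

definition mem_after :: "('var \<Rightarrow> 'val) \<Rightarrow> ('var,'val) sop list \<Rightarrow> 'var \<Rightarrow> 'val" where
  "mem_after init ops = fold (\<lambda>op m. case op of SWrite x v \<Rightarrow> m(x := v) | SRead x v \<Rightarrow> m) ops init"

definition valid_seq :: "('var \<Rightarrow> 'val) \<Rightarrow> ('var,'val) sop list \<Rightarrow> bool" where
  "valid_seq init ops \<longleftrightarrow>
     (\<forall>k < length ops. \<forall>x v. ops ! k = SRead x v \<longrightarrow> v = mem_after init (take k ops) x)"

text \<open>A computation of the specified multiprogram: one sequence of completed operations
  per (single-threaded) process. Operations are identified by (process, index).\<close>
definition sops_of :: "('p \<Rightarrow> ('var,'val) sop list) \<Rightarrow> 'p \<Rightarrow> ('p \<times> nat) set" where
  "sops_of C p = {(p, i) | i. i < length (C p)}"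

definition sop_at :: "('p \<Rightarrow> ('var,'val) sop list) \<Rightarrow> 'p \<times> nat \<Rightarrow> ('var,'val) sop" where
  "sop_at C a = C (fst a) ! snd a"

definition swrites :: "('p \<Rightarrow> ('var,'val) sop list) \<Rightarrow> ('p \<times> nat) set" where
  "swrites C = {(q, i) | q i. i < length (C q) \<and> is_swrite (C q ! i)}"

definition swrites_in :: "('p \<Rightarrow> ('var,'val) sop list) \<Rightarrow> 'var set \<Rightarrow> ('p \<times> nat) set" where
  "swrites_in C S = {a \<in> swrites C. sop_var (sop_at C a) \<in> S}"

definition sprog :: "'p \<times> nat \<Rightarrow> 'p \<times> nat \<Rightarrow> bool" where
  "sprog a b \<longleftrightarrow> fst a = fst b \<and> snd a < snd b"

text \<open>K = {V_1,...,V_m} is given as the list [V_1,...,V_m]: a partition of a subset of V.\<close>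
definition partition_of_subset :: "'var set list \<Rightarrow> 'var set \<Rightarrow> bool" where
  "partition_of_subset Ks V \<longleftrightarrow>
     (\<forall>i < length Ks. Ks ! i \<noteq> {} \<and> Ks ! i \<subseteq> V) \<and>
     (\<forall>i j. i < length Ks \<longrightarrow> j < length Ks \<longrightarrow> i \<noteq> j \<longrightarrow> Ks ! i \<inter> Ks ! j = {})"

definition PC :: "'var set list \<Rightarrow> ('var \<Rightarrow> 'val) \<Rightarrow> ('p \<Rightarrow> ('var,'val) sop list) \<Rightarrow> bool" where
  "PC Ks init C \<longleftrightarrow>
    (\<exists>L :: 'p \<Rightarrow> ('p \<times> nat) list.
       (\<forall>p. distinct (L p) \<and> set (L p) = sops_of C p \<union> swrites C \<and>
            valid_seq init (map (sop_at C) (L p)) \<and>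
            (\<forall>a \<in> set (L p). \<forall>b \<in> set (L p). sprog a b \<longrightarrow> before (L p) a b)) \<and>
       (\<forall>p q. \<forall>i < length Ks. \<forall>a \<in> swrites_in C (Ks ! i). \<forall>b \<in> swrites_in C (Ks ! i).
            before (L p) a b \<longleftrightarrow> before (L q) a b))"

text \<open>Update objects. Update objects are unique: besides the payload [x, v, source]
  an update carries the sequence number of the write (among the writes of its source)
  that broadcast it.\<close>
datatype ('p,'var,'val) upd = Upd 'p nat 'var 'val

text \<open>Target operations: accesses to the local variables Memory.x, writes-requested,
  writes-processed, and broadcast operations (label None = unlabeled).\<close>
datatype ('p,'var,'val) top =
    TReadMem 'var 'val | TWriteMem 'var 'val
  | TReadReq nat | TWriteReq nat
  | TReadPrc nat | TWritePrc nat
  | TBcast "('p,'var,'val) upd" "nat option"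
  | TDeliver "('p,'var,'val) upd" "nat option"

datatype thr = MainT | DelT

datatype transformation = SWFR | FWSR

definition tmem_after :: "('var \<Rightarrow> 'val) \<Rightarrow> ('p,'var,'val) top list \<Rightarrow> 'var \<Rightarrow> 'val" where
  "tmem_after init ops = fold (\<lambda>op m. case op of TWriteMem y v \<Rightarrow> m(y := v) | _ \<Rightarrow> m) ops init"

definition req_after :: "('p,'var,'val) top list \<Rightarrow> nat" where
  "req_after ops = fold (\<lambda>op n. case op of TWriteReq k \<Rightarrow> k | _ \<Rightarrow> n) ops 0"

definition prc_after :: "('p,'var,'val) top list \<Rightarrow> nat" where
  "prc_after ops = fold (\<lambda>op n. case op of TWritePrc k \<Rightarrow> k | _ \<Rightarrow> n) ops 0"

definition tvalid :: "('var \<Rightarrow> 'val) \<Rightarrow> ('p,'var,'val) top list \<Rightarrow> bool" where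
  "tvalid init ops \<longleftrightarrow>
     (\<forall>k < length ops.
        (\<forall>x v. ops ! k = TReadMem x v \<longrightarrow> v = tmem_after init (take k ops) x) \<and>
        (\<forall>n. ops ! k = TReadReq n \<longrightarrow> n = req_after (take k ops)) \<and>
        (\<forall>n. ops ! k = TReadPrc n \<longrightarrow> n = prc_after (take k ops))) \<and>
     (\<forall>j k u l. j < length ops \<longrightarrow> k < length ops \<longrightarrow>
        ops ! k = TDeliver u l \<longrightarrow> ops ! j = TBcast u l \<longrightarrow> j < k) \<and>
     (\<forall>j k u l. j < length ops \<longrightarrow> k < length ops \<longrightarrow>
        ops ! j = TDeliver u l \<longrightarrow> ops ! k = TDeliver u l \<longrightarrow> j = k)"

text \<open>A target computation: M p is the main thread of p-hat, D p its delivery thread.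
  Operations are identified by (process, thread, index).\<close>
definition tthread :: "('p \<Rightarrow> ('p,'var,'val) top list) \<Rightarrow> ('p \<Rightarrow> ('p,'var,'val) top list)
    \<Rightarrow> 'p \<Rightarrow> thr \<Rightarrow> ('p,'var,'val) top list" where
  "tthread M D p t = (case t of MainT \<Rightarrow> M p | DelT \<Rightarrow> D p)"

definition tops_of :: "('p \<Rightarrow> ('p,'var,'val) top list) \<Rightarrow> ('p \<Rightarrow> ('p,'var,'val) top list)
    \<Rightarrow> 'p \<Rightarrow> ('p \<times> thr \<times> nat) set" where
  "tops_of M D p = {(p, t, i) | t i. i < length (tthread M D p t)}"

definition all_tops :: "('p \<Rightarrow> ('p,'var,'val) top list) \<Rightarrow> ('p \<Rightarrow> ('p,'var,'val) top list)
    \<Rightarrow> ('p \<times> thr \<times> nat) set" where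
  "all_tops M D = (\<Union>p. tops_of M D p)"

definition top_at :: "('p \<Rightarrow> ('p,'var,'val) top list) \<Rightarrow> ('p \<Rightarrow> ('p,'var,'val) top list)
    \<Rightarrow> 'p \<times> thr \<times> nat \<Rightarrow> ('p,'var,'val) top" where
  "top_at M D a = (case a of (p, t, i) \<Rightarrow> tthread M D p t ! i)"

definition tprog :: "'p \<times> thr \<times> nat \<Rightarrow> 'p \<times> thr \<times> nat \<Rightarrow> bool" where
  "tprog a b \<longleftrightarrow> (case a of (p, t, i) \<Rightarrow> case b of (q, s, j) \<Rightarrow> p = q \<and> t = s \<and> i < j)"

definition delOrder :: "('p \<Rightarrow> ('p,'var,'val) top list) \<Rightarrow> ('p \<Rightarrow> ('p,'var,'val) top list)
    \<Rightarrow> 'p \<times> thr \<times> nat \<Rightarrow> 'p \<times> thr \<times> nat \<Rightarrow> bool" where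
  "delOrder M D a b \<longleftrightarrow>
     (\<exists>u1 l1 u2 l2. top_at M D a = TDeliver u1 l1 \<and> top_at M D b = TDeliver u2 l2 \<and>
        (\<exists>c \<in> all_tops M D. \<exists>d \<in> all_tops M D. tprog c d \<and>
            top_at M D c = TBcast u1 l1 \<and> top_at M D d = TBcast u2 l2))"

text \<open>Deliveries with label l of u1 before u2 in the order Lp (deliveries at different
  processes are identified through the update they deliver).\<close>
definition del_before :: "('p \<Rightarrow> ('p,'var,'val) top list) \<Rightarrow> ('p \<Rightarrow> ('p,'var,'val) top list)
    \<Rightarrow> ('p \<times> thr \<times> nat) list \<Rightarrow> ('p,'var,'val) upd \<Rightarrow> ('p,'var,'val) upd \<Rightarrow> nat \<Rightarrow> bool" where
  "del_before M D Lp u1 u2 l \<longleftrightarrow>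
     (\<exists>a b. before Lp a b \<and> top_at M D a = TDeliver u1 (Some l) \<and> top_at M D b = TDeliver u2 (Some l))"

definition POB :: "nat \<Rightarrow> ('var \<Rightarrow> 'val) \<Rightarrow> ('p \<Rightarrow> ('p,'var,'val) top list)
    \<Rightarrow> ('p \<Rightarrow> ('p,'var,'val) top list) \<Rightarrow> bool" where
  "POB m init M D \<longleftrightarrow>
    (\<exists>L :: 'p \<Rightarrow> ('p \<times> thr \<times> nat) list.
       (\<forall>p. distinct (L p) \<and> set (L p) = tops_of M D p \<and>
            tvalid init (map (top_at M D) (L p)) \<and>
            (\<forall>a \<in> set (L p). \<forall>b \<in> set (L p).
               tprog a b \<or> delOrder M D a b \<longrightarrow> before (L p) a b)) \<and>
       (\<forall>p q. \<forall>l \<in> {1..m}. \<forall>u1 u2.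
            del_before M D (L p) u1 u2 l \<longleftrightarrow> del_before M D (L q) u1 u2 l) \<and>
       (\<forall>p u l. (\<exists>a \<in> all_tops M D. top_at M D a = TBcast u l) \<longleftrightarrow>
                (\<exists>a \<in> tops_of M D p. top_at M D a = TDeliver u l)))"

text \<open>Label of a variable: i if x is in V_i (labels 1..m), None (unlabeled) otherwise.\<close>
definition label :: "'var set list \<Rightarrow> 'var \<Rightarrow> nat option" where
  "label Ks x = (if \<exists>i < length Ks. x \<in> Ks ! i
                 then Some (Suc (SOME i. i < length Ks \<and> x \<in> Ks ! i)) else None)"

text \<open>Completed executions of WaitWritesComplete: repeatedly read writes-processed and
  writes-requested, until writes-processed is not smaller than writes-requested.\<close>
inductive wwc_trace :: "('p,'var,'val) top list \<Rightarrow> bool" where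
  wwc_exit: "\<not> a < b \<Longrightarrow> wwc_trace [TReadPrc a, TReadReq b]"
| wwc_loop: "a < b \<Longrightarrow> wwc_trace w \<Longrightarrow> wwc_trace (TReadPrc a # TReadReq b # w)"

text \<open>main_exec tr Ks p n ivs ms cs: the main thread of p-hat, executing the (completed)
  subroutines of transformation tr for the invocations ivs (n = number of earlier writes
  of p), performs ms; the interpreted specified operations (with responses) are cs.\<close>
inductive main_exec :: "transformation \<Rightarrow> 'var set list \<Rightarrow> 'p \<Rightarrow> nat \<Rightarrow> ('var,'val) inv list
    \<Rightarrow> ('p,'var,'val) top list \<Rightarrow> ('var,'val) sop list \<Rightarrow> bool" where
  me_nil: "main_exec tr Ks p n [] [] []"
| me_rd_swfr: "main_exec SWFR Ks p n ivs ms cs \<Longrightarrow>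
    main_exec SWFR Ks p n (RdInv x # ivs) (TReadMem x v # ms) (SRead x v # cs)"
| me_rd_fwsr: "wwc_trace w \<Longrightarrow> main_exec FWSR Ks p n ivs ms cs \<Longrightarrow>
    main_exec FWSR Ks p n (RdInv x # ivs) (w @ TReadMem x v # ms) (SRead x v # cs)"
| me_wr_swfr: "wwc_trace w \<Longrightarrow> main_exec SWFR Ks p (Suc n) ivs ms cs \<Longrightarrow>
    main_exec SWFR Ks p n (WrInv x v # ivs)
      ([TReadReq r, TWriteReq (Suc r), TBcast (Upd p n x v) (label Ks x)] @ w @ ms)
      (SWrite x v # cs)"
| me_wr_fwsr: "main_exec FWSR Ks p (Suc n) ivs ms cs \<Longrightarrow>
    main_exec FWSR Ks p n (WrInv x v # ivs)
      ([TReadReq r, TWriteReq (Suc r), TBcast (Upd p n x v) (label Ks x)] @ ms)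
      (SWrite x v # cs)"

text \<open>One complete iteration of the delivery loop of p-hat (k = value read from
  writes-processed).\<close>
definition del_iter :: "'p \<Rightarrow> ('p,'var,'val) upd \<Rightarrow> nat option \<Rightarrow> nat \<Rightarrow> ('p,'var,'val) top list" where
  "del_iter p u l k = (case u of Upd s n x v \<Rightarrow>
      [TDeliver u l, TWriteMem x v] @ (if s = p then [TReadPrc k, TWritePrc (Suc k)] else []))"

text \<open>A finite execution of the delivery thread: a prefix of finitely many iterations
  (the last one possibly incomplete).\<close>
definition del_trace :: "'p \<Rightarrow> ('p,'var,'val) top list \<Rightarrow> bool" where
  "del_trace p ds \<longleftrightarrow>
     (\<exists>its ys. ds @ ys = concat (map (\<lambda>(u, l, k). del_iter p u l k) its))"

end

theory Submission
  imports Defs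
begin

lemma before_in: "before xs a b \<Longrightarrow> a \<in> set xs \<and> b \<in> set xs"
  unfolding before_def by auto

lemma distinct_nth_eq: "distinct xs \<Longrightarrow> i < length xs \<Longrightarrow> j < length xs \<Longrightarrow> xs!i = xs!j \<Longrightarrow> i = j"
  using nth_eq_iff_index_eq by blast

lemma before_nth: "distinct xs \<Longrightarrow> i < length xs \<Longrightarrow> j < length xs \<Longrightarrow>
   before xs (xs!i) (xs!j) \<longleftrightarrow> i < j"
proof
  assume d: "distinct xs" and ij: "i < length xs" "j < length xs" and "before xs (xs!i) (xs!j)"
  then obtain i' j' where "i' < j'" "j' < length xs" "xs!i' = xs!i" "xs!j' = xs!j" unfolding before_def by auto
  moreover have "i' = i" by (rule distinct_nth_eq[OF d]) (use ij calculation in auto)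
  moreover have "j' = j" by (rule distinct_nth_eq[OF d]) (use ij calculation in auto)
  ultimately show "i < j" by simp
next
  assume "distinct xs" "i < length xs" "j < length xs" "i < j"
  then show "before xs (xs!i) (xs!j)" unfolding before_def by blast
qed

lemma before_idx: "before xs a b \<Longrightarrow> \<exists>i j. i < j \<and> j < length xs \<and> xs!i = a \<and> xs!j = b"
  unfolding before_def by auto

lemma before_irrefl: "distinct xs \<Longrightarrow> \<not> before xs a a"
proof
  assume d: "distinct xs" and "before xs a a"
  then obtain i j where ij: "i < j" "j < length xs" "xs!i = a" "xs!j = a" unfolding before_def by blast
  have "i = j" by (rule distinct_nth_eq[OF d]) (use ij in auto)
  then show False using ij by simp
qed

lemma before_asym: "distinct xs \<Longrightarrow> before xs a b \<Longrightarrow> \<not> before xs b a"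
proof
  assume d: "distinct xs" and "before xs a b" "before xs b a"
  then obtain i j where 1: "i < j" "j < length xs" "xs!i = a" "xs!j = b" unfolding before_def by blast
  from \<open>before xs b a\<close> obtain i' j' where 2: "i' < j'" "j' < length xs" "xs!i' = b" "xs!j' = a" unfolding before_def by blast
  have "i = j'" by (rule distinct_nth_eq[OF d]) (use 1 2 in auto)
  moreover have "j = i'" by (rule distinct_nth_eq[OF d]) (use 1 2 in auto)
  ultimately show False using 1 2 by simp
qed

lemma before_trans: "distinct xs \<Longrightarrow> before xs a b \<Longrightarrow> before xs b c \<Longrightarrow> before xs a c"
proof -
  assume d: "distinct xs" and "before xs a b" "before xs b c"
  then obtain i j where 1: "i < j" "j < length xs" "xs!i = a" "xs!j = b" unfolding before_def by blast
  from \<open>before xs b c\<close> obtain i' j' where 2: "i' < j'" "j' < length xs" "xs!i' = b" "xs!j' = c" unfolding before_def by blast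
  have "j = i'" by (rule distinct_nth_eq[OF d]) (use 1 2 in auto)
  then show "before xs a c" unfolding before_def using 1 2 by (intro exI[of _ i] exI[of _ j']) auto
qed

lemma before_total: "a \<in> set xs \<Longrightarrow> b \<in> set xs \<Longrightarrow> a \<noteq> b \<Longrightarrow> before xs a b \<or> before xs b a"
proof -
  assume "a \<in> set xs" "b \<in> set xs" "a \<noteq> b"
  then obtain i j where "i < length xs" "xs!i = a" "j < length xs" "xs!j = b" by (auto simp: in_set_conv_nth)
  moreover have "i \<noteq> j" using calculation \<open>a \<noteq> b\<close> by auto
  ultimately show ?thesis unfolding before_def by (cases "i < j") (blast, (rule disjI2, rule exI[of _ j], rule exI[of _ i], auto))
qed

lemma before_split: "before xs a b \<longleftrightarrow> (\<exists>ys zs. xs = ys @ zs \<and> a \<in> set ys \<and> b \<in> set zs)"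
proof
  assume "before xs a b"
  then obtain i j where ij: "i < j" "j < length xs" "xs!i = a" "xs!j = b" unfolding before_def by auto
  show "\<exists>ys zs. xs = ys @ zs \<and> a \<in> set ys \<and> b \<in> set zs"
  proof (intro exI conjI)
    show "xs = take (Suc i) xs @ drop (Suc i) xs" by simp
    have "take (Suc i) xs ! i = a" "i < length (take (Suc i) xs)" using ij by auto
    then show "a \<in> set (take (Suc i) xs)" by (metis nth_mem)
    have "drop (Suc i) xs ! (j - Suc i) = b" "j - Suc i < length (drop (Suc i) xs)" using ij by auto
    then show "b \<in> set (drop (Suc i) xs)" by (metis nth_mem)
  qed
next
  assume "\<exists>ys zs. xs = ys @ zs \<and> a \<in> set ys \<and> b \<in> set zs"
  then obtain ys zs where "xs = ys @ zs" "a \<in> set ys" "b \<in> set zs" by auto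
  then obtain i j where "i < length ys" "ys!i = a" "j < length zs" "zs!j = b" by (auto simp: in_set_conv_nth)
  then show "before xs a b" unfolding before_def using \<open>xs = ys @ zs\<close>
    by (intro exI[of _ i] exI[of _ "length ys + j"]) (auto simp: nth_append)
qed

lemma filter_eq_append_conv':
  "filter P xs = ys @ zs \<Longrightarrow> \<exists>us vs. xs = us @ vs \<and> filter P us = ys \<and> filter P vs = zs"
proof (induction xs arbitrary: ys)
  case Nil then show ?case by auto
next
  case (Cons x xs)
  show ?case
  proof (cases "P x")
    case True
    show ?thesis
    proof (cases ys)
      case Nil
      then show ?thesis using Cons.prems by (intro exI[of _ "[]"] exI[of _ "x#xs"]) auto
    next
      case (Cons y ys')
      with Cons.prems True have "filter P xs = ys' @ zs" by auto
      from Cons.IH[OF this] obtain us vs where "xs = us @ vs" "filter P us = ys'" "filter P vs = zs" by auto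
      then show ?thesis using Cons.prems True \<open>ys = y # ys'\<close> by (intro exI[of _ "x#us"] exI[of _ vs]) auto
    qed
  next
    case False
    with Cons.prems have "filter P xs = ys @ zs" by auto
    from Cons.IH[OF this] obtain us vs where "xs = us @ vs" "filter P us = ys" "filter P vs = zs" by auto
    then show ?thesis using False by (intro exI[of _ "x#us"] exI[of _ vs]) auto
  qed
qed

lemma before_filter: "before (filter P xs) a b \<longleftrightarrow> P a \<and> P b \<and> before xs a b"
proof
  assume "before (filter P xs) a b"
  then obtain ys zs where "filter P xs = ys @ zs" "a \<in> set ys" "b \<in> set zs" by (auto simp: before_split)
  from filter_eq_append_conv'[OF this(1)] obtain us vs where "xs = us @ vs" "filter P us = ys" "filter P vs = zs" by auto
  then show "P a \<and> P b \<and> before xs a b" using \<open>a \<in> set ys\<close> \<open>b \<in> set zs\<close> unfolding before_split by auto blast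
next
  assume "P a \<and> P b \<and> before xs a b"
  then obtain ys zs where "xs = ys @ zs" "a \<in> set ys" "b \<in> set zs" "P a" "P b" by (auto simp: before_split)
  then show "before (filter P xs) a b" unfolding before_split by (intro exI[of _ "filter P ys"] exI[of _ "filter P zs"]) auto
qed

lemma before_map: "inj_on h (set xs) \<Longrightarrow> a \<in> set xs \<Longrightarrow> b \<in> set xs \<Longrightarrow>
  before (map h xs) (h a) (h b) \<longleftrightarrow> before xs a b"
proof
  assume inj: "inj_on h (set xs)" and ab: "a \<in> set xs" "b \<in> set xs" and "before (map h xs) (h a) (h b)"
  then obtain ys zs where "map h xs = ys @ zs" "h a \<in> set ys" "h b \<in> set zs" by (auto simp: before_split)
  then obtain us vs where uv: "xs = us @ vs" "map h us = ys" "map h vs = zs" by (auto simp: map_eq_append_conv)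
  then obtain a' b' where "a' \<in> set us" "h a' = h a" "b' \<in> set vs" "h b' = h b"
    using \<open>h a \<in> set ys\<close> \<open>h b \<in> set zs\<close> by auto
  then have "a' = a" "b' = b" using inj ab uv by (auto simp: inj_on_def)
  then show "before xs a b" using uv \<open>a' \<in> set us\<close> \<open>b' \<in> set vs\<close> unfolding before_split by blast
next
  assume "before xs a b"
  then obtain ys zs where "xs = ys @ zs" "a \<in> set ys" "b \<in> set zs" unfolding before_split by blast
  then show "before (map h xs) (h a) (h b)" unfolding before_split by (intro exI[of _ "map h ys"] exI[of _ "map h zs"]) auto
qed

lemma before_app_left: "before xs a b \<Longrightarrow> before (xs @ ys) a b"
proof -
  assume "before xs a b"
  then obtain i j where "i < j" "j < length xs" "xs!i = a" "xs!j = b" unfolding before_def by blast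
  then show ?thesis unfolding before_def by (intro exI[of _ i] exI[of _ j]) (auto simp: nth_append)
qed

lemma before_app_end: "a \<in> set xs \<Longrightarrow> before (xs @ [e]) a e"
  unfolding before_split by (intro exI[of _ xs] exI[of _ "[e]"]) auto

lemma before_app_single: "distinct (xs @ [e]) \<Longrightarrow> a \<in> set xs \<Longrightarrow> b \<in> set xs \<Longrightarrow>
   before (xs @ [e]) a b \<longleftrightarrow> before xs a b"
proof
  assume d: "distinct (xs @ [e])" and ab: "a \<in> set xs" "b \<in> set xs" and bf: "before (xs @ [e]) a b"
  have "a \<noteq> b" using bf before_irrefl[OF d] by metis
  then have "before xs a b \<or> before xs b a" by (rule before_total[OF ab])
  moreover have "\<not> before xs b a"
  proof
    assume "before xs b a"
    then have "before (xs @ [e]) b a" by (rule before_app_left)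
    then show False using before_asym[OF d bf] by simp
  qed
  ultimately show "before xs a b" by simp
qed (rule before_app_left)

lemma set_take_before: "distinct xs \<Longrightarrow> k < length xs \<Longrightarrow> set (take k xs) = {x. before xs x (xs!k)}"
proof (intro set_eqI iffI)
  fix x assume d: "distinct xs" and k: "k < length xs" and "x \<in> set (take k xs)"
  then obtain i where "i < k" "xs!i = x" by (auto simp: in_set_conv_nth)
  then show "x \<in> {x. before xs x (xs!k)}" using k unfolding before_def by auto
next
  fix x assume d: "distinct xs" and k: "k < length xs" and "x \<in> {x. before xs x (xs!k)}"
  then obtain i j where "i < j" "j < length xs" "xs!i = x" "xs!j = xs!k" unfolding before_def by auto
  moreover have "j = k" by (rule distinct_nth_eq[OF d]) (use calculation k in auto)
  ultimately show "x \<in> set (take k xs)" by (auto simp: in_set_conv_nth intro!: exI[of _ i])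
qed

abbreviation DZ :: "'p \<Rightarrow> (('p,'var,'val) upd \<times> nat option \<times> nat) list \<Rightarrow> ('p, 'var, 'val) top list" where
 "DZ p its \<equiv> concat (map (\<lambda>(u, l, k). del_iter p u l k) its)"

lemma del_iter_cases:
  "\<exists>s n x v. u = Upd s n x v \<and> del_iter p u l k = [TDeliver u l, TWriteMem x v] @ (if s = p then [TReadPrc k, TWritePrc (Suc k)] else [])"
  by (cases u) (auto simp: del_iter_def)

lemma nth_less4: "d < 4 \<Longrightarrow> d = 0 \<or> d = 1 \<or> d = 2 \<or> d = (3::nat)" by arith

lemma DZ_cons: "DZ p ((u,l,k) # its) = del_iter p u l k @ DZ p its" by simp

lemma DZ_props:
  fixes its :: "(('p,'var,'val) upd \<times> nat option \<times> nat) list"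
  shows "d < length (DZ p its) \<Longrightarrow>
   (case DZ p its ! d of TReadMem _ _ \<Rightarrow> False | TBcast _ _ \<Rightarrow> False | TReadReq _ \<Rightarrow> False | TWriteReq _ \<Rightarrow> False | _ \<Rightarrow> True) \<and>
   (\<forall>u l. DZ p its ! d = TDeliver u l \<longrightarrow> Suc d < length (DZ p its) \<and> (\<exists>s n x v. u = Upd s n x v \<and> DZ p its ! Suc d = TWriteMem x v)) \<and>
   (\<forall>x v. DZ p its ! d = TWriteMem x v \<longrightarrow> 0 < d \<and> (\<exists>s n l. DZ p its ! (d - 1) = TDeliver (Upd s n x v) l)) \<and>
   (\<forall>j. DZ p its ! d = TWritePrc j \<longrightarrow> 3 \<le> d \<and> (\<exists>k. j = Suc k \<and> DZ p its ! (d - 1) = TReadPrc k) \<and> (\<exists>n x v l. DZ p its ! (d - 3) = TDeliver (Upd p n x v) l))"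
proof (induction its arbitrary: d)
  case Nil then show ?case by simp
next
  case (Cons it its)
  obtain u l k where it: "it = (u,l,k)" by (cases it)
  obtain s n x v where u: "u = Upd s n x v" and I: "del_iter p u l k = [TDeliver u l, TWriteMem x v] @ (if s = p then [TReadPrc k, TWritePrc (Suc k)] else [])"
    using del_iter_cases[of u p l k] by blast
  define I where "I = del_iter p u l k"
  have Z: "DZ p (it # its) = I @ DZ p its" using it I_def by simp
  show ?case
  proof (cases "d < length I")
    case True
    show ?thesis
    proof (cases "s = p")
      case True
      with I I_def have II: "I = [TDeliver u l, TWriteMem x v, TReadPrc k, TWritePrc (Suc k)]" by simp
      from \<open>d < length I\<close> II have "d = 0 \<or> d = 1 \<or> d = 2 \<or> d = 3" by simp arith
      then show ?thesis unfolding Z II using u True by (elim disjE) (auto simp: nth_append)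
    next
      case False
      with I I_def have II: "I = [TDeliver u l, TWriteMem x v]" by simp
      from \<open>d < length I\<close> II have "d = 0 \<or> d = 1" by simp arith
      then show ?thesis unfolding Z II using u by (elim disjE) (auto simp: nth_append)
    qed
  next
    case False
    define d' where "d' = d - length I"
    have d: "d = length I + d'" using False d'_def by simp
    have lt: "d' < length (DZ p its)" using Cons.prems Z d by simp
    note IH = Cons.IH[OF lt]
    have L: "length I \<ge> 2" using I I_def by simp
    have e0: "(I @ DZ p its) ! d = DZ p its ! d'" using d by (simp add: nth_append)
    have e1: "(I @ DZ p its) ! Suc d = DZ p its ! Suc d'" using d by (simp add: nth_append)
    have e2: "(I @ DZ p its) ! (d - 1) = DZ p its ! (d' - 1)" if "0 < d'"
    proof -
      have "d - 1 = length I + (d' - 1)" using d that by simp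
      then show ?thesis by (simp only: nth_append_length_plus)
    qed
    have e3: "(I @ DZ p its) ! (d - 3) = DZ p its ! (d' - 3)" if "3 \<le> d'"
    proof -
      have "d - 3 = length I + (d' - 3)" using d that by simp
      then show ?thesis by (simp only: nth_append_length_plus)
    qed
    show ?thesis unfolding Z using IH e0 e1 e2 e3 d by (auto simp: nth_append)
  qed
qed

definition nw :: "('var,'val) sop list \<Rightarrow> nat \<Rightarrow> nat" where
  "nw cs i = length (filter is_swrite (take i cs))"

definition wait_at :: "('p,'var,'val) top list \<Rightarrow> nat \<Rightarrow> bool" where
  "wait_at ms w \<longleftrightarrow> (\<exists>a c. Suc w < length ms \<and> ms!w = TReadPrc a \<and> ms!(Suc w) = TReadReq c \<and> c \<le> a)"

definition Mok :: "('p,'var,'val) top \<Rightarrow> bool" where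
  "Mok op \<longleftrightarrow> (case op of TWriteMem _ _ \<Rightarrow> False | TWritePrc _ \<Rightarrow> False | TDeliver _ _ \<Rightarrow> False | _ \<Rightarrow> True)"

definition MS :: "transformation \<Rightarrow> 'var set list \<Rightarrow> 'p \<Rightarrow> nat \<Rightarrow> ('p,'var,'val) top list \<Rightarrow> ('var,'val) sop list \<Rightarrow> (nat \<Rightarrow> nat) \<Rightarrow> bool" where
 "MS tr Ks p n ms cs \<rho> \<longleftrightarrow>
 (\<forall>i j. i<j \<longrightarrow> j < length cs \<longrightarrow> \<rho> i < \<rho> j) \<and>
 (\<forall>i<length cs. \<rho> i < length ms) \<and>
 (\<forall>i<length cs. \<forall>x v. cs!i = SRead x v \<longrightarrow> ms!(\<rho> i) = TReadMem x v) \<and>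
 (\<forall>i<length cs. \<forall>x v. cs!i = SWrite x v \<longrightarrow> 2 \<le> \<rho> i \<and> ms!(\<rho> i) = TBcast (Upd p (n + nw cs i) x v) (label Ks x) \<and>
      (\<exists>r. ms!(\<rho> i - 1) = TWriteReq (Suc r) \<and> ms!(\<rho> i - 2) = TReadReq r)) \<and>
 (\<forall>m<length ms. (\<forall>x v. ms!m = TReadMem x v \<longrightarrow> (\<exists>i<length cs. \<rho> i = m)) \<and>
     (\<forall>u l. ms!m = TBcast u l \<longrightarrow> (\<exists>i<length cs. \<rho> i = m)) \<and>
     (\<forall>k. ms!m = TWriteReq k \<longrightarrow> (\<exists>i<length cs. is_swrite (cs!i) \<and> \<rho> i = Suc m)) \<and> Mok (ms!m)) \<and>
 (tr = SWFR \<longrightarrow> (\<forall>i<length cs. is_swrite (cs!i) \<longrightarrow> (\<exists>w. \<rho> i < w \<and> wait_at ms w \<and> (\<forall>j. i<j \<longrightarrow> j<length cs \<longrightarrow> Suc w < \<rho> j)))) \<and>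
 (tr = FWSR \<longrightarrow> (\<forall>j<length cs. \<not> is_swrite (cs!j) \<longrightarrow> (\<exists>w. Suc w < \<rho> j \<and> wait_at ms w \<and> (\<forall>i<j. \<rho> i < w))))"

lemma nw_Suc: "nw (c # cs) (Suc i) = (if is_swrite c then Suc (nw cs i) else nw cs i)"
  by (simp add: nw_def)

lemma nw_0: "nw cs 0 = 0" by (simp add: nw_def)

lemma wait_at_shift: "wait_at ms w \<Longrightarrow> wait_at (seg @ ms) (length seg + w)"
  unfolding wait_at_def by (auto simp: nth_append)

lemma wait_at_prefix: "wait_at seg w \<Longrightarrow> wait_at (seg @ ms) w"
  unfolding wait_at_def by (auto simp: nth_append)

lemma MS_D:
  assumes "MS tr Ks p n ms cs \<rho>"
  shows MS_D1: "\<And>i j. i<j \<Longrightarrow> j < length cs \<Longrightarrow> \<rho> i < \<rho> j"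
   and MS_D2: "\<And>i. i<length cs \<Longrightarrow> \<rho> i < length ms"
   and MS_D3: "\<And>i x v. i<length cs \<Longrightarrow> cs!i = SRead x v \<Longrightarrow> ms!(\<rho> i) = TReadMem x v"
   and MS_D4: "\<And>i x v. i<length cs \<Longrightarrow> cs!i = SWrite x v \<Longrightarrow> 2 \<le> \<rho> i \<and> ms!(\<rho> i) = TBcast (Upd p (n + nw cs i) x v) (label Ks x) \<and>
      (\<exists>r. ms!(\<rho> i - 1) = TWriteReq (Suc r) \<and> ms!(\<rho> i - 2) = TReadReq r)"
   and MS_D5a: "\<And>m x v. m<length ms \<Longrightarrow> ms!m = TReadMem x v \<Longrightarrow> (\<exists>i<length cs. \<rho> i = m)"
   and MS_D5b: "\<And>m u l. m<length ms \<Longrightarrow> ms!m = TBcast u l \<Longrightarrow> (\<exists>i<length cs. \<rho> i = m)"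
   and MS_D5c: "\<And>m k. m<length ms \<Longrightarrow> ms!m = TWriteReq k \<Longrightarrow> (\<exists>i<length cs. is_swrite (cs!i) \<and> \<rho> i = Suc m)"
   and MS_D5d: "\<And>m. m<length ms \<Longrightarrow> Mok (ms!m)"
   and MS_D6: "\<And>i. tr = SWFR \<Longrightarrow> i<length cs \<Longrightarrow> is_swrite (cs!i) \<Longrightarrow> (\<exists>w. \<rho> i < w \<and> wait_at ms w \<and> (\<forall>j. i<j \<longrightarrow> j<length cs \<longrightarrow> Suc w < \<rho> j))"
   and MS_D7: "\<And>j. tr = FWSR \<Longrightarrow> j<length cs \<Longrightarrow> \<not> is_swrite (cs!j) \<Longrightarrow> (\<exists>w. Suc w < \<rho> j \<and> wait_at ms w \<and> (\<forall>i<j. \<rho> i < w))"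
  using assms unfolding MS_def by simp_all

lemma MS_nil: "MS tr Ks p n [] [] \<rho>"
  unfolding MS_def by simp

lemma MS_cons:
  assumes ms: "MS tr Ks p n' ms cs \<rho>"
    and n': "n' = (if is_swrite c then Suc n else n)"
    and b: "b < length seg"
    and rd: "\<And>x v. c = SRead x v \<Longrightarrow> seg!b = TReadMem x v"
    and wr: "\<And>x v. c = SWrite x v \<Longrightarrow> 2 \<le> b \<and> seg!b = TBcast (Upd p n x v) (label Ks x) \<and>
              (\<exists>r. seg!(b - 1) = TWriteReq (Suc r) \<and> seg!(b - 2) = TReadReq r)"
    and segm: "\<And>m. m < length seg \<Longrightarrow> (\<forall>x v. seg!m = TReadMem x v \<longrightarrow> m = b) \<and>
         (\<forall>u l. seg!m = TBcast u l \<longrightarrow> m = b) \<and> (\<forall>k. seg!m = TWriteReq k \<longrightarrow> is_swrite c \<and> Suc m = b) \<and> Mok (seg!m)"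
    and sw: "tr = SWFR \<Longrightarrow> is_swrite c \<Longrightarrow> \<exists>w. b < w \<and> wait_at seg w"
    and fw: "tr = FWSR \<Longrightarrow> \<not> is_swrite c \<Longrightarrow> \<exists>w. Suc w < b \<and> wait_at seg w"
  shows "MS tr Ks p n (seg @ ms) (c # cs) (\<lambda>i. if i = 0 then b else length seg + \<rho> (i - 1))"
proof -
  let ?r = "\<lambda>i. if i = 0 then b else length seg + \<rho> (i - 1)"
  have m1: "\<forall>i j. i<j \<longrightarrow> j < length (c#cs) \<longrightarrow> ?r i < ?r j"
  proof (intro allI impI)
    fix i j assume "i < j" "j < length (c#cs)"
    then show "?r i < ?r j" using MS_D1[OF ms] MS_D2[OF ms] b by (cases i; cases j) auto
  qed
  have m2: "\<forall>i<length (c#cs). ?r i < length (seg @ ms)"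
  proof (intro allI impI)
    fix i assume "i < length (c#cs)"
    then show "?r i < length (seg @ ms)" using MS_D2[OF ms] b by (cases i) auto
  qed
  have m3: "\<forall>i<length (c#cs). \<forall>x v. (c#cs)!i = SRead x v \<longrightarrow> (seg @ ms)!(?r i) = TReadMem x v"
  proof (intro allI impI)
    fix i x v assume "i < length (c#cs)" "(c#cs)!i = SRead x v"
    then show "(seg @ ms)!(?r i) = TReadMem x v" using MS_D3[OF ms] b rd by (cases i) (auto simp: nth_append)
  qed
  have m4: "\<forall>i<length (c#cs). \<forall>x v. (c#cs)!i = SWrite x v \<longrightarrow> 2 \<le> ?r i \<and> (seg @ ms)!(?r i) = TBcast (Upd p (n + nw (c#cs) i) x v) (label Ks x) \<and>
      (\<exists>r. (seg @ ms)!(?r i - 1) = TWriteReq (Suc r) \<and> (seg @ ms)!(?r i - 2) = TReadReq r)"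
  proof (intro allI impI)
    fix i x v assume i: "i < length (c#cs)" and ci: "(c#cs)!i = SWrite x v"
    show "2 \<le> ?r i \<and> (seg @ ms)!(?r i) = TBcast (Upd p (n + nw (c#cs) i) x v) (label Ks x) \<and>
      (\<exists>r. (seg @ ms)!(?r i - 1) = TWriteReq (Suc r) \<and> (seg @ ms)!(?r i - 2) = TReadReq r)"
    proof (cases i)
      case 0
      then have cw: "c = SWrite x v" using ci by simp
      show ?thesis using wr[OF cw] 0 b by (auto simp: nth_append nw_0)
    next
      case (Suc i')
      then have i': "i' < length cs" "cs!i' = SWrite x v" using i ci by auto
      then obtain r where r: "2 \<le> \<rho> i'" "ms!(\<rho> i') = TBcast (Upd p (n' + nw cs i') x v) (label Ks x)"
          "ms!(\<rho> i' - 1) = TWriteReq (Suc r)" "ms!(\<rho> i' - 2) = TReadReq r" using MS_D4[OF ms i'] by blast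
      have e1: "length seg + \<rho> i' - 1 = length seg + (\<rho> i' - 1)" using r by simp
      have e2: "length seg + \<rho> i' - 2 = length seg + (\<rho> i' - 2)" using r by simp
      have "n + nw (c#cs) i = n' + nw cs i'" using Suc n' by (simp add: nw_Suc)
      moreover have "(seg @ ms)!(length seg + \<rho> i') = ms!(\<rho> i')" by (rule nth_append_length_plus)
      moreover have "(seg @ ms)!(length seg + \<rho> i' - 1) = ms!(\<rho> i' - 1)" unfolding e1 by (rule nth_append_length_plus)
      moreover have "(seg @ ms)!(length seg + \<rho> i' - 2) = ms!(\<rho> i' - 2)" unfolding e2 by (rule nth_append_length_plus)
      ultimately show ?thesis using Suc r by auto
    qed
  qed
  have m5: "\<forall>m<length (seg @ ms). (\<forall>x v. (seg @ ms)!m = TReadMem x v \<longrightarrow> (\<exists>i<length (c#cs). ?r i = m)) \<and>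
     (\<forall>u l. (seg @ ms)!m = TBcast u l \<longrightarrow> (\<exists>i<length (c#cs). ?r i = m)) \<and>
     (\<forall>k. (seg @ ms)!m = TWriteReq k \<longrightarrow> (\<exists>i<length (c#cs). is_swrite ((c#cs)!i) \<and> ?r i = Suc m)) \<and> Mok ((seg @ ms)!m)"
  proof (intro allI impI)
    fix m assume m: "m < length (seg @ ms)"
    show "(\<forall>x v. (seg @ ms)!m = TReadMem x v \<longrightarrow> (\<exists>i<length (c#cs). ?r i = m)) \<and>
     (\<forall>u l. (seg @ ms)!m = TBcast u l \<longrightarrow> (\<exists>i<length (c#cs). ?r i = m)) \<and>
     (\<forall>k. (seg @ ms)!m = TWriteReq k \<longrightarrow> (\<exists>i<length (c#cs). is_swrite ((c#cs)!i) \<and> ?r i = Suc m)) \<and> Mok ((seg @ ms)!m)"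
    proof (cases "m < length seg")
      case True
      then have e: "(seg @ ms)!m = seg!m" by (simp add: nth_append)
      have z: "?r 0 = b" "0 < length (c#cs)" "(c#cs)!0 = c" by auto
      note S = segm[OF True]
      show ?thesis unfolding e
      proof (intro conjI allI impI)
        fix x v assume "seg!m = TReadMem x v"
        then have "m = b" using S by blast
        then show "\<exists>i<length (c#cs). ?r i = m" by (intro exI[of _ 0]) simp
      next
        fix u l assume "seg!m = TBcast u l"
        then have "m = b" using S by blast
        then show "\<exists>i<length (c#cs). ?r i = m" by (intro exI[of _ 0]) simp
      next
        fix k assume "seg!m = TWriteReq k"
        then have "is_swrite c \<and> Suc m = b" using S by blast
        then show "\<exists>i<length (c#cs). is_swrite ((c#cs)!i) \<and> ?r i = Suc m" by (intro exI[of _ 0]) simp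
      next
        show "Mok (seg!m)" using S by blast
      qed
    next
      case False
      define m' where "m' = m - length seg"
      have mm: "m = length seg + m'" "m' < length ms" using False m m'_def by auto
      have e: "(seg @ ms)!m = ms!m'" using mm by (simp add: nth_append)
      have sh: "\<And>i. i < length cs \<Longrightarrow> ?r (Suc i) = length seg + \<rho> i \<and> Suc i < length (c#cs) \<and> (c#cs)!(Suc i) = cs!i" by simp
      show ?thesis unfolding e
      proof (intro conjI allI impI)
        fix x v assume "ms!m' = TReadMem x v"
        then obtain i where "i < length cs" "\<rho> i = m'" using MS_D5a[OF ms mm(2)] by blast
        then show "\<exists>i<length (c#cs). ?r i = m" using sh[of i] mm by metis
      next
        fix u l assume "ms!m' = TBcast u l"
        then obtain i where "i < length cs" "\<rho> i = m'" using MS_D5b[OF ms mm(2)] by blast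
        then show "\<exists>i<length (c#cs). ?r i = m" using sh[of i] mm by metis
      next
        fix k assume "ms!m' = TWriteReq k"
        then obtain i where "i < length cs" "is_swrite (cs!i)" "\<rho> i = Suc m'" using MS_D5c[OF ms mm(2)] by blast
        then show "\<exists>i<length (c#cs). is_swrite ((c#cs)!i) \<and> ?r i = Suc m" using sh[of i] mm
          by (metis add_Suc_right)
      next
        show "Mok (ms!m')" using MS_D5d[OF ms mm(2)] .
      qed
    qed
  qed
  have m6: "tr = SWFR \<longrightarrow> (\<forall>i<length (c#cs). is_swrite ((c#cs)!i) \<longrightarrow> (\<exists>w. ?r i < w \<and> wait_at (seg @ ms) w \<and> (\<forall>j. i<j \<longrightarrow> j<length (c#cs) \<longrightarrow> Suc w < ?r j)))"
  proof (intro impI allI)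
    fix i assume tr: "tr = SWFR" and i: "i < length (c#cs)" and iw: "is_swrite ((c#cs)!i)"
    show "\<exists>w. ?r i < w \<and> wait_at (seg @ ms) w \<and> (\<forall>j. i<j \<longrightarrow> j<length (c#cs) \<longrightarrow> Suc w < ?r j)"
    proof (cases i)
      case 0
      then obtain w where w: "b < w" "wait_at seg w" using sw[OF tr] iw by auto
      then have "Suc w < length seg" unfolding wait_at_def by auto
      then show ?thesis using 0 w wait_at_prefix[OF w(2)] by (intro exI[of _ w]) auto
    next
      case (Suc i')
      then have "i' < length cs" "is_swrite (cs!i')" using i iw by auto
      then obtain w where w: "\<rho> i' < w" "wait_at ms w" "\<forall>j. i'<j \<longrightarrow> j<length cs \<longrightarrow> Suc w < \<rho> j"
        using MS_D6[OF ms tr] by blast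
      show ?thesis
      proof (intro exI[of _ "length seg + w"] conjI allI impI)
        show "?r i < length seg + w" using Suc w by simp
        show "wait_at (seg @ ms) (length seg + w)" using wait_at_shift[OF w(2)] .
        fix j assume "i < j" "j < length (c#cs)"
        then show "Suc (length seg + w) < ?r j" using Suc w(3) by (cases j) auto
      qed
    qed
  qed
  have m7: "tr = FWSR \<longrightarrow> (\<forall>j<length (c#cs). \<not> is_swrite ((c#cs)!j) \<longrightarrow> (\<exists>w. Suc w < ?r j \<and> wait_at (seg @ ms) w \<and> (\<forall>i<j. ?r i < w)))"
  proof (intro impI allI)
    fix j assume tr: "tr = FWSR" and j: "j < length (c#cs)" and jw: "\<not> is_swrite ((c#cs)!j)"
    show "\<exists>w. Suc w < ?r j \<and> wait_at (seg @ ms) w \<and> (\<forall>i<j. ?r i < w)"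
    proof (cases j)
      case 0
      then obtain w where w: "Suc w < b" "wait_at seg w" using fw[OF tr] jw by auto
      then show ?thesis using 0 wait_at_prefix[OF w(2)] by (intro exI[of _ w]) auto
    next
      case (Suc j')
      then have "j' < length cs" "\<not> is_swrite (cs!j')" using j jw by auto
      then obtain w where w: "Suc w < \<rho> j'" "wait_at ms w" "\<forall>i<j'. \<rho> i < w"
        using MS_D7[OF ms tr] by blast
      show ?thesis
      proof (intro exI[of _ "length seg + w"] conjI allI impI)
        show "Suc (length seg + w) < ?r j" using Suc w by simp
        show "wait_at (seg @ ms) (length seg + w)" using wait_at_shift[OF w(2)] .
        fix i assume "i < j"
        then show "?r i < length seg + w" using Suc w(3) b by (cases i) auto
      qed
    qed
  qed
  show ?thesis unfolding MS_def using m1 m2 m3 m4 m5 m6 m7 by (intro conjI)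
qed

lemma wwc_props: "wwc_trace w \<Longrightarrow> 2 \<le> length w \<and> wait_at w (length w - 2) \<and>
   (\<forall>m<length w. (\<exists>a. w!m = TReadPrc a) \<or> (\<exists>a. w!m = TReadReq a))"
proof (induction rule: wwc_trace.induct)
  case (wwc_exit a b)
  then show ?case unfolding wait_at_def by (auto simp: less_Suc_eq nth_Cons')
next
  case (wwc_loop a b w)
  have L: "2 \<le> length w" using wwc_loop.IH by blast
  have e: "length (TReadPrc a # TReadReq b # w) - 2 = length [TReadPrc a, TReadReq b] + (length w - 2)" using L by simp
  have wa: "wait_at ([TReadPrc a, TReadReq b] @ w) (length [TReadPrc a, TReadReq b] + (length w - 2))"
    using wait_at_shift[OF conjunct1[OF conjunct2[OF wwc_loop.IH]], of "[TReadPrc a, TReadReq b]"] by simp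
  show ?case
  proof (intro conjI allI impI)
    show "2 \<le> length (TReadPrc a # TReadReq b # w)" by simp
    show "wait_at (TReadPrc a # TReadReq b # w) (length (TReadPrc a # TReadReq b # w) - 2)" using wa by (subst e) (simp only: append_Cons append_Nil)
    fix m assume "m < length (TReadPrc a # TReadReq b # w)"
    then show "(\<exists>a'. (TReadPrc a # TReadReq b # w)!m = TReadPrc a') \<or> (\<exists>a'. (TReadPrc a # TReadReq b # w)!m = TReadReq a')"
      using wwc_loop by (cases m; cases "m - 1") auto
  qed
qed

lemma main_MS: "main_exec tr Ks p n ivs ms cs \<Longrightarrow> \<exists>\<rho>. MS tr Ks p n ms cs \<rho>"
proof (induction rule: main_exec.induct)
  case (me_nil tr Ks p n)
  show ?case by (rule exI, rule MS_nil)
next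
  case (me_rd_swfr Ks p n ivs ms cs x v)
  then obtain \<rho> where r: "MS SWFR Ks p n ms cs \<rho>" by blast
  have app: "TReadMem x v # ms = [TReadMem x v] @ ms" by simp
  show ?case unfolding app
    by (rule exI, rule MS_cons[OF r, where b = 0]) (auto simp: Mok_def)
next
  case (me_rd_fwsr w Ks p n ivs ms cs x v)
  then obtain \<rho> where r: "MS FWSR Ks p n ms cs \<rho>" by blast
  note W = wwc_props[OF me_rd_fwsr(1)]
  have app: "w @ TReadMem x v # ms = (w @ [TReadMem x v]) @ ms" by simp
  show ?case unfolding app
  proof (rule exI, rule MS_cons[OF r, where b = "length w"])
    fix m assume m: "m < length (w @ [TReadMem x v])"
    show "(\<forall>x' v'. (w @ [TReadMem x v])!m = TReadMem x' v' \<longrightarrow> m = length w) \<and>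
         (\<forall>u l. (w @ [TReadMem x v])!m = TBcast u l \<longrightarrow> m = length w) \<and>
         (\<forall>k. (w @ [TReadMem x v])!m = TWriteReq k \<longrightarrow> is_swrite (SRead x v) \<and> Suc m = length w) \<and>
         Mok ((w @ [TReadMem x v])!m)"
    proof (cases "m < length w")
      case True
      then show ?thesis using W by (auto simp: nth_append Mok_def)
    next
      case False
      then have "m = length w" using m by simp
      then show ?thesis by (simp add: Mok_def)
    qed
  next
    show "\<exists>w'. Suc w' < length w \<and> wait_at (w @ [TReadMem x v]) w'"
      using W wait_at_prefix[of w "length w - 2" "[TReadMem x v]"] by (intro exI[of _ "length w - 2"]) auto
  qed (auto simp: nth_append)
next
  case (me_wr_swfr w Ks p n ivs ms cs x v r)
  then obtain \<rho> where rh: "MS SWFR Ks p (Suc n) ms cs \<rho>" by blast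
  note W = wwc_props[OF me_wr_swfr(1)]
  let ?s = "[TReadReq r, TWriteReq (Suc r), TBcast (Upd p n x v) (label Ks x)] @ w"
  have app: "[TReadReq r, TWriteReq (Suc r), TBcast (Upd p n x v) (label Ks x)] @ w @ ms = ?s @ ms" by simp
  show ?case unfolding app
  proof (rule exI, rule MS_cons[OF rh, where b = 2])
    fix m assume m: "m < length ?s"
    show "(\<forall>x' v'. ?s!m = TReadMem x' v' \<longrightarrow> m = 2) \<and>
         (\<forall>u l. ?s!m = TBcast u l \<longrightarrow> m = 2) \<and>
         (\<forall>k. ?s!m = TWriteReq k \<longrightarrow> is_swrite (SWrite x v) \<and> Suc m = 2) \<and> Mok (?s!m)"
    proof (cases "m < 3")
      case True
      then have "m = 0 \<or> m = 1 \<or> m = 2" by arith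
      then show ?thesis by (elim disjE) (auto simp: Mok_def)
    next
      case False
      then have "m - 3 < length w" "?s!m = w!(m-3)" using m by (auto simp: nth_append numeral_eq_Suc)
      then show ?thesis using W by (auto simp: Mok_def)
    qed
  next
    show "\<exists>w'. 2 < w' \<and> wait_at ?s w'"
    proof -
      have ha: "wait_at ([TReadReq r, TWriteReq (Suc r), TBcast (Upd p n x v) (label Ks x)] @ w)
          (length [TReadReq r, TWriteReq (Suc r), TBcast (Upd p n x v) (label Ks x)] + (length w - 2))"
        using wait_at_shift[OF conjunct1[OF conjunct2[OF W]]] .
      show ?thesis by (rule exI, rule conjI[OF _ ha]) simp
    qed
  qed (auto simp: nth_append)
next
  case (me_wr_fwsr Ks p n ivs ms cs x v r)
  then obtain \<rho> where rh: "MS FWSR Ks p (Suc n) ms cs \<rho>" by blast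
  let ?s = "[TReadReq r, TWriteReq (Suc r), TBcast (Upd p n x v) (label Ks x)]"
  show ?case
  proof (rule exI, rule MS_cons[OF rh, where b = 2])
    fix m assume m: "m < length ?s"
    then have "m = 0 \<or> m = 1 \<or> m = 2" by auto
    then show "(\<forall>x' v'. ?s!m = TReadMem x' v' \<longrightarrow> m = 2) \<and>
         (\<forall>u l. ?s!m = TBcast u l \<longrightarrow> m = 2) \<and>
         (\<forall>k. ?s!m = TWriteReq k \<longrightarrow> is_swrite (SWrite x v) \<and> Suc m = 2) \<and> Mok (?s!m)"
      by (elim disjE) (auto simp: Mok_def)
  qed auto
qed

definition last_val :: "('a \<Rightarrow> nat option) \<Rightarrow> 'a list \<Rightarrow> nat" where
  "last_val gW xs = fold (\<lambda>op n. case gW op of Some k \<Rightarrow> k | None \<Rightarrow> n) xs 0"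

lemma last_val_snoc: "last_val gW (xs @ [op]) = (case gW op of Some k \<Rightarrow> k | None \<Rightarrow> last_val gW xs)"
  unfolding last_val_def by simp

lemma counter:
  fixes xs :: "'a list"
  assumes valid: "\<And>j r. j < length xs \<Longrightarrow> gR (xs!j) = Some r \<Longrightarrow> r = last_val gW (take j xs)"
    and link: "\<And>k v. k < length xs \<Longrightarrow> gW (xs!k) = Some v \<Longrightarrow>
        (\<exists>j<k. \<exists>r. gR (xs!j) = Some r \<and> v = Suc r \<and> (\<forall>q. j \<le> q \<longrightarrow> q < k \<longrightarrow> gW (xs!q) = None))"
  shows "k \<le> length xs \<Longrightarrow> last_val gW (take k xs) = card {q. q < k \<and> gW (xs!q) \<noteq> None}"
proof (induction k rule: less_induct)
  case (less k)
  show ?case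
  proof (cases k)
    case 0
    then show ?thesis by (simp add: last_val_def)
  next
    case (Suc k0)
    have k0: "k0 < length xs" using less.prems Suc by simp
    have tk: "take k xs = take k0 xs @ [xs!k0]" using Suc k0 by (simp add: take_Suc_conv_app_nth)
    have setS: "{q. q < k \<and> gW (xs!q) \<noteq> None} = {q. q < k0 \<and> gW (xs!q) \<noteq> None} \<union> (if gW (xs!k0) \<noteq> None then {k0} else {})"
      using Suc by (auto simp: less_Suc_eq)
    show ?thesis
    proof (cases "gW (xs!k0)")
      case None
      then have "last_val gW (take k xs) = last_val gW (take k0 xs)" unfolding tk last_val_snoc by simp
      also have "\<dots> = card {q. q < k0 \<and> gW (xs!q) \<noteq> None}" using less.IH[of k0] Suc k0 by simp
      finally show ?thesis using setS None by simp
    next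
      case (Some v)
      then obtain j r where j: "j < k0" "gR (xs!j) = Some r" "v = Suc r" "\<forall>q. j \<le> q \<longrightarrow> q < k0 \<longrightarrow> gW (xs!q) = None"
        using link[OF k0] by blast
      have e1: "last_val gW (take k xs) = v" unfolding tk last_val_snoc using Some by simp
      have e2: "r = last_val gW (take j xs)" using valid[of j r] j k0 by simp
      have e3: "last_val gW (take j xs) = card {q. q < j \<and> gW (xs!q) \<noteq> None}" using less.IH[of j] j Suc k0 by simp
      have e4: "{q. q < j \<and> gW (xs!q) \<noteq> None} = {q. q < k0 \<and> gW (xs!q) \<noteq> None}"
        using j(1,4) by (auto simp: not_less) (metis not_le option.distinct(1))
      have e: "last_val gW (take k xs) = Suc (card {q. q < k0 \<and> gW (xs!q) \<noteq> None})" using e1 e2 e3 e4 j by simp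
      have "card {q. q < k \<and> gW (xs!q) \<noteq> None} = Suc (card {q. q < k0 \<and> gW (xs!q) \<noteq> None})"
        using setS Some by (simp add: card_insert_if)
      then show ?thesis using e by simp
    qed
  qed
qed

lemma card_idx_set: "distinct xs \<Longrightarrow> k < length xs \<Longrightarrow>
  card {q. q < k \<and> P (xs!q)} = card {x. before xs x (xs!k) \<and> P x}"
proof -
  assume d: "distinct xs" and k: "k < length xs"
  have "{x. before xs x (xs!k) \<and> P x} = (\<lambda>q. xs!q) ` {q. q < k \<and> P (xs!q)}"
  proof (intro set_eqI iffI)
    fix x assume "x \<in> {x. before xs x (xs!k) \<and> P x}"
    then have "x \<in> set (take k xs)" "P x" using set_take_before[OF d k] by auto
    then obtain q where "q < length (take k xs)" "take k xs ! q = x" by (auto simp: in_set_conv_nth)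
    then have "q < k" "xs!q = x" by auto
    then show "x \<in> (\<lambda>q. xs!q) ` {q. q < k \<and> P (xs!q)}" using \<open>P x\<close> by auto
  next
    fix x assume "x \<in> (\<lambda>q. xs!q) ` {q. q < k \<and> P (xs!q)}"
    then obtain q where "q < k" "P (xs!q)" "x = xs!q" by auto
    then show "x \<in> {x. before xs x (xs!k) \<and> P x}" using before_nth[OF d, of q k] k by auto
  qed
  moreover have "inj_on (\<lambda>q. xs!q) {q. q < k \<and> P (xs!q)}"
  proof (rule inj_onI)
    fix q1 q2 assume "q1 \<in> {q. q < k \<and> P (xs!q)}" "q2 \<in> {q. q < k \<and> P (xs!q)}" "xs!q1 = xs!q2"
    then show "q1 = q2" using distinct_nth_eq[OF d, of q1 q2] k by auto
  qed
  ultimately show ?thesis by (simp add: card_image)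
qed

fun phi :: "('p,'var,'val) top \<Rightarrow> ('var,'val) sop list" where
  "phi (TReadMem x v) = [SRead x v]"
| "phi (TWriteMem x v) = [SWrite x v]"
| "phi _ = []"

lemma mem_after_snoc: "mem_after init (xs @ [op]) = (case op of SWrite x v \<Rightarrow> (mem_after init xs)(x := v) | SRead x v \<Rightarrow> mem_after init xs)"
  unfolding mem_after_def by simp

lemma tmem_after_snoc: "tmem_after init (xs @ [op]) = (case op of TWriteMem x v \<Rightarrow> (tmem_after init xs)(x := v) | _ \<Rightarrow> tmem_after init xs)"
  unfolding tmem_after_def by simp

lemma mem_after_phi: "mem_after init (concat (map phi xs)) = tmem_after init xs"
proof (induction xs rule: rev_induct)
  case Nil then show ?case by (simp add: mem_after_def tmem_after_def)
next
  case (snoc op xs)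
  then show ?case by (cases op) (simp_all add: mem_after_snoc tmem_after_snoc)
qed

lemma valid_seq_snoc: "valid_seq init (ys @ [op]) \<longleftrightarrow> valid_seq init ys \<and> (\<forall>x v. op = SRead x v \<longrightarrow> v = mem_after init ys x)"
proof -
  have A: "\<And>k. k < length ys \<Longrightarrow> (ys @ [op])!k = ys!k \<and> take k (ys @ [op]) = take k ys" by (simp add: nth_append)
  have B: "(ys @ [op])!(length ys) = op \<and> take (length ys) (ys @ [op]) = ys" by simp
  have C: "\<And>k. k < length (ys @ [op]) \<longleftrightarrow> k < length ys \<or> k = length ys" by auto
  show ?thesis unfolding valid_seq_def C using A B by metis
qed

lemma valid_phi: "(\<forall>k<length xs. \<forall>x v. xs!k = TReadMem x v \<longrightarrow> v = tmem_after init (take k xs) x) \<Longrightarrow>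
   valid_seq init (concat (map phi xs))"
proof (induction xs rule: rev_induct)
  case Nil then show ?case by (simp add: valid_seq_def)
next
  case (snoc op xs)
  have pre: "\<forall>k<length xs. \<forall>x v. xs!k = TReadMem x v \<longrightarrow> v = tmem_after init (take k xs) x"
    using snoc.prems by (auto simp: nth_append)
  have last: "\<forall>x v. op = TReadMem x v \<longrightarrow> v = tmem_after init xs x"
    using snoc.prems[rule_format, of "length xs"] by simp
  have v: "valid_seq init (concat (map phi xs))" using snoc.IH pre by blast
  show ?case
  proof (cases op)
    case (TReadMem x v)
    then show ?thesis using v last mem_after_phi[of init xs] by (simp add: valid_seq_snoc)
  next
    case (TWriteMem x v)
    then show ?thesis using v by (simp add: valid_seq_snoc)
  qed (use v in simp_all)
qed

lemma valid_seq_app_writes: "valid_seq init ys \<Longrightarrow> (\<forall>op\<in>set zs. is_swrite op) \<Longrightarrow> valid_seq init (ys @ zs)"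
proof (induction zs rule: rev_induct)
  case Nil then show ?case by simp
next
  case (snoc z zs)
  then have "valid_seq init (ys @ zs)" by simp
  moreover have "is_swrite z" using snoc.prems by simp
  ultimately show ?case using valid_seq_snoc[of init "ys @ zs" z] by (cases z) auto
qed

locale SYS =
  fixes tr :: transformation and Ks :: "'var set list" and init :: "'var \<Rightarrow> 'val"
    and M D :: "'p \<Rightarrow> ('p,'var,'val) top list" and C :: "'p \<Rightarrow> ('var,'val) sop list"
    and \<rho> :: "'p \<Rightarrow> nat \<Rightarrow> nat" and LT :: "'p \<Rightarrow> ('p \<times> thr \<times> nat) list"
  assumes ms: "\<And>p. MS tr Ks p 0 (M p) (C p) (\<rho> p)"
    and dt: "\<And>p. del_trace p (D p)"
    and LTd: "\<And>p. distinct (LT p)"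
    and LTs: "\<And>p. set (LT p) = tops_of M D p"
    and LTv: "\<And>p. tvalid init (map (top_at M D) (LT p))"
    and LTo: "\<And>p a b. a \<in> set (LT p) \<Longrightarrow> b \<in> set (LT p) \<Longrightarrow> tprog a b \<or> delOrder M D a b \<Longrightarrow> before (LT p) a b"
    and agree: "\<And>p q l u1 u2. l \<in> {1..length Ks} \<Longrightarrow> del_before M D (LT p) u1 u2 l \<longleftrightarrow> del_before M D (LT q) u1 u2 l"
    and bd: "\<And>p u l. (\<exists>a \<in> all_tops M D. top_at M D a = TBcast u l) \<longleftrightarrow> (\<exists>a \<in> tops_of M D p. top_at M D a = TDeliver u l)"
begin

lemma inT_M: "(q, MainT, m) \<in> set (LT p) \<longleftrightarrow> q = p \<and> m < length (M p)"
  using LTs by (auto simp: tops_of_def tthread_def)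

lemma inT_D: "(q, DelT, m) \<in> set (LT p) \<longleftrightarrow> q = p \<and> m < length (D p)"
  using LTs by (auto simp: tops_of_def tthread_def)

lemma inT_cases: "x \<in> set (LT p) \<Longrightarrow> (\<exists>m. x = (p, MainT, m) \<and> m < length (M p)) \<or> (\<exists>d. x = (p, DelT, d) \<and> d < length (D p))"
  using LTs by (cases x) (auto simp: tops_of_def tthread_def split: thr.splits)

lemma top_M[simp]: "top_at M D (q, MainT, m) = M q ! m" by (simp add: top_at_def tthread_def)
lemma top_D[simp]: "top_at M D (q, DelT, m) = D q ! m" by (simp add: top_at_def tthread_def)

lemma all_tops_M: "(q, MainT, m) \<in> all_tops M D \<longleftrightarrow> m < length (M q)"
  by (auto simp: all_tops_def tops_of_def tthread_def)

lemma all_tops_D: "(q, DelT, m) \<in> all_tops M D \<longleftrightarrow> m < length (D q)"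
  by (auto simp: all_tops_def tops_of_def tthread_def)

lemma all_tops_cases: "x \<in> all_tops M D \<Longrightarrow> (\<exists>q m. x = (q, MainT, m) \<and> m < length (M q)) \<or> (\<exists>q d. x = (q, DelT, d) \<and> d < length (D q))"
  by (cases x) (auto simp: all_tops_def tops_of_def tthread_def split: thr.splits)

lemma tops_of_all: "tops_of M D p \<subseteq> all_tops M D" by (auto simp: all_tops_def)

lemma Dp:
  assumes d: "d < length (D p)"
  shows "(case D p ! d of TReadMem _ _ \<Rightarrow> False | TBcast _ _ \<Rightarrow> False | TReadReq _ \<Rightarrow> False | TWriteReq _ \<Rightarrow> False | _ \<Rightarrow> True)"
    and "\<And>u l. D p ! d = TDeliver u l \<Longrightarrow> Suc d < length (D p) \<Longrightarrow> (\<exists>s n x v. u = Upd s n x v \<and> D p ! Suc d = TWriteMem x v)"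
    and "\<And>x v. D p ! d = TWriteMem x v \<Longrightarrow> 0 < d \<and> (\<exists>s n l. D p ! (d - 1) = TDeliver (Upd s n x v) l)"
    and "\<And>j. D p ! d = TWritePrc j \<Longrightarrow> 3 \<le> d \<and> (\<exists>k. j = Suc k \<and> D p ! (d - 1) = TReadPrc k) \<and> (\<exists>n x v l. D p ! (d - 3) = TDeliver (Upd p n x v) l)"
proof -
  obtain its ys where e: "D p @ ys = DZ p its" using dt[of p] unfolding del_trace_def by blast
  have len: "length (D p) \<le> length (DZ p its)" using e[symmetric] by simp
  have nth: "\<And>i. i < length (D p) \<Longrightarrow> D p ! i = DZ p its ! i" using e[symmetric] by (simp add: nth_append)
  note P = DZ_props[of d p its]
  have dl: "d < length (DZ p its)" using d len by simp
  show "(case D p ! d of TReadMem _ _ \<Rightarrow> False | TBcast _ _ \<Rightarrow> False | TReadReq _ \<Rightarrow> False | TWriteReq _ \<Rightarrow> False | _ \<Rightarrow> True)"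
    using P[OF dl] nth[OF d] by simp
  show "\<And>u l. D p ! d = TDeliver u l \<Longrightarrow> Suc d < length (D p) \<Longrightarrow> (\<exists>s n x v. u = Upd s n x v \<and> D p ! Suc d = TWriteMem x v)"
    using P[OF dl] nth[OF d] nth by metis
  show "\<And>x v. D p ! d = TWriteMem x v \<Longrightarrow> 0 < d \<and> (\<exists>s n l. D p ! (d - 1) = TDeliver (Upd s n x v) l)"
  proof -
    fix x v assume "D p ! d = TWriteMem x v"
    then have "0 < d \<and> (\<exists>s n l. DZ p its ! (d - 1) = TDeliver (Upd s n x v) l)" using P[OF dl] nth[OF d] by simp
    moreover have "d - 1 < length (D p)" using d by simp
    ultimately show "0 < d \<and> (\<exists>s n l. D p ! (d - 1) = TDeliver (Upd s n x v) l)" using nth by metis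
  qed
  show "\<And>j. D p ! d = TWritePrc j \<Longrightarrow> 3 \<le> d \<and> (\<exists>k. j = Suc k \<and> D p ! (d - 1) = TReadPrc k) \<and> (\<exists>n x v l. D p ! (d - 3) = TDeliver (Upd p n x v) l)"
  proof -
    fix j assume "D p ! d = TWritePrc j"
    then have "3 \<le> d \<and> (\<exists>k. j = Suc k \<and> DZ p its ! (d - 1) = TReadPrc k) \<and> (\<exists>n x v l. DZ p its ! (d - 3) = TDeliver (Upd p n x v) l)"
      using P[OF dl] nth[OF d] by simp
    moreover have "d - 1 < length (D p)" "d - 3 < length (D p)" using d by auto
    ultimately show "3 \<le> d \<and> (\<exists>k. j = Suc k \<and> D p ! (d - 1) = TReadPrc k) \<and> (\<exists>n x v l. D p ! (d - 3) = TDeliver (Upd p n x v) l)"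
      using nth by metis
  qed
qed

lemma Mok_M: "m < length (M p) \<Longrightarrow> Mok (M p ! m)" using MS_D5d[OF ms] .

lemma thr_before: "(p, t, i) \<in> set (LT p) \<Longrightarrow> (p, t, j) \<in> set (LT p) \<Longrightarrow> i < j \<Longrightarrow> before (LT p) (p, t, i) (p, t, j)"
  by (rule LTo) (auto simp: tprog_def)

lemma thr_before_iff: "(p, t, i) \<in> set (LT p) \<Longrightarrow> (p, t, j) \<in> set (LT p) \<Longrightarrow> before (LT p) (p, t, i) (p, t, j) \<longleftrightarrow> i < j"
proof
  assume a: "(p, t, i) \<in> set (LT p)" "(p, t, j) \<in> set (LT p)" and b: "before (LT p) (p, t, i) (p, t, j)"
  show "i < j"
  proof (rule ccontr)
    assume "\<not> i < j"
    then have "j < i \<or> j = i" by auto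
    then show False
    proof
      assume "j < i"
      then have "before (LT p) (p, t, j) (p, t, i)" using thr_before a by blast
      then show False using before_asym[OF LTd b] by blast
    next
      assume "j = i"
      then show False using before_irrefl[OF LTd] b by simp
    qed
  qed
qed (rule thr_before)

end

lemma nw_Suc_nth: "i < length cs \<Longrightarrow> nw cs (Suc i) = nw cs i + (if is_swrite (cs!i) then 1 else 0)"
  by (simp add: nw_def take_Suc_conv_app_nth)

lemma nw_mono: "i \<le> j \<Longrightarrow> nw cs i \<le> nw cs j"
proof -
  assume "i \<le> j"
  then obtain k where "j = i + k" by (metis le_add_diff_inverse)
  then have "take j cs = take i cs @ take k (drop i cs)" by (simp add: take_add)
  then show ?thesis by (simp add: nw_def)
qed

lemma nw_strict: "i < j \<Longrightarrow> j \<le> length cs \<Longrightarrow> is_swrite (cs!i) \<Longrightarrow> nw cs i < nw cs j"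
proof -
  assume a: "i < j" "j \<le> length cs" "is_swrite (cs!i)"
  then have "nw cs (Suc i) = Suc (nw cs i)" using nw_Suc_nth[of i cs] by simp
  moreover have "nw cs (Suc i) \<le> nw cs j" using a by (intro nw_mono) simp
  ultimately show ?thesis by simp
qed

lemma is_swrite_ex: "is_swrite c \<longleftrightarrow> (\<exists>x v. c = SWrite x v)" by (cases c) auto

context SYS begin

definition wupd :: "'p \<times> nat \<Rightarrow> ('p,'var,'val) upd" where
 "wupd w = (case C (fst w) ! snd w of SWrite x v \<Rightarrow> Upd (fst w) (nw (C (fst w)) (snd w)) x v | SRead x v \<Rightarrow> Upd (fst w) 0 x v)"

definition wlab :: "'p \<times> nat \<Rightarrow> nat option" where
 "wlab w = label Ks (sop_var (sop_at C w))"

lemma swrites_iff: "(q, i) \<in> swrites C \<longleftrightarrow> i < length (C q) \<and> is_swrite (C q ! i)"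
  by (simp add: swrites_def)

lemma W1: "(q, i) \<in> swrites C \<Longrightarrow> \<rho> q i < length (M q) \<and> M q ! \<rho> q i = TBcast (wupd (q, i)) (wlab (q, i))"
proof -
  assume "(q, i) \<in> swrites C"
  then have i: "i < length (C q)" and w: "is_swrite (C q ! i)" by (auto simp: swrites_iff)
  then obtain x v where c: "C q ! i = SWrite x v" by (cases "C q ! i") auto
  show ?thesis using MS_D4[OF ms i c] MS_D2[OF ms i] c by (simp add: wupd_def wlab_def sop_at_def)
qed

lemma W2: "m < length (M q) \<Longrightarrow> M q ! m = TBcast u l \<Longrightarrow> \<exists>i. (q, i) \<in> swrites C \<and> \<rho> q i = m \<and> u = wupd (q, i) \<and> l = wlab (q, i)"
proof -
  assume m: "m < length (M q)" and b: "M q ! m = TBcast u l"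
  obtain i where i: "i < length (C q)" "\<rho> q i = m" using MS_D5b[OF ms m b] by blast
  show ?thesis
  proof (cases "C q ! i")
    case (SRead x v)
    then show ?thesis using MS_D3[OF ms i(1) SRead] i b by simp
  next
    case (SWrite x v)
    then have "(q, i) \<in> swrites C" using i by (simp add: swrites_iff)
    then show ?thesis using W1[of q i] i b by auto
  qed
qed

lemma W3: "w1 \<in> swrites C \<Longrightarrow> w2 \<in> swrites C \<Longrightarrow> wupd w1 = wupd w2 \<Longrightarrow> w1 = w2"
proof -
  assume a: "w1 \<in> swrites C" "w2 \<in> swrites C" "wupd w1 = wupd w2"
  obtain q1 i1 q2 i2 where w: "w1 = (q1, i1)" "w2 = (q2, i2)" by (cases w1, cases w2) auto
  obtain x1 v1 where c1: "C q1 ! i1 = SWrite x1 v1" "i1 < length (C q1)" using a w by (auto simp: swrites_iff is_swrite_ex)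
  obtain x2 v2 where c2: "C q2 ! i2 = SWrite x2 v2" "i2 < length (C q2)" using a w by (auto simp: swrites_iff is_swrite_ex)
  have e: "q1 = q2" "nw (C q1) i1 = nw (C q2) i2" using a(3) w c1 c2 by (auto simp: wupd_def)
  have "i1 = i2"
  proof (rule ccontr)
    assume "i1 \<noteq> i2"
    then have "i1 < i2 \<or> i2 < i1" by auto
    then show False
    proof
      assume "i1 < i2" then show False using nw_strict[of i1 i2 "C q1"] c1 c2 e by simp
    next
      assume "i2 < i1" then show False using nw_strict[of i2 i1 "C q1"] c1 c2 e by simp
    qed
  qed
  then show ?thesis using e w by simp
qed

lemma bcast_char: "a \<in> all_tops M D \<Longrightarrow> top_at M D a = TBcast u l \<Longrightarrow> \<exists>w \<in> swrites C. u = wupd w \<and> l = wlab w \<and> a = (fst w, MainT, \<rho> (fst w) (snd w))"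
proof -
  assume a: "a \<in> all_tops M D" "top_at M D a = TBcast u l"
  from all_tops_cases[OF a(1)] show ?thesis
  proof
    assume "\<exists>q m. a = (q, MainT, m) \<and> m < length (M q)"
    then obtain q m where "a = (q, MainT, m)" "m < length (M q)" by blast
    then show ?thesis using W2[of m q u l] a by force
  next
    assume "\<exists>q d. a = (q, DelT, d) \<and> d < length (D q)"
    then obtain q d where "a = (q, DelT, d)" "d < length (D q)" by blast
    then show ?thesis using Dp(1)[of d q] a by simp
  qed
qed

lemma W4: "d < length (D p) \<Longrightarrow> D p ! d = TDeliver u l \<Longrightarrow> \<exists>w \<in> swrites C. u = wupd w \<and> l = wlab w"
proof -
  assume d: "d < length (D p)" "D p ! d = TDeliver u l"
  have "(p, DelT, d) \<in> tops_of M D p" using d inT_D LTs by blast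
  then have "\<exists>a \<in> tops_of M D p. top_at M D a = TDeliver u l" using d by force
  then obtain a where "a \<in> all_tops M D" "top_at M D a = TBcast u l" using bd by blast
  then show ?thesis using bcast_char by blast
qed

lemma W5: "w \<in> swrites C \<Longrightarrow> \<exists>d < length (D p). D p ! d = TDeliver (wupd w) (wlab w)"
proof -
  assume w: "w \<in> swrites C"
  obtain q i where wq: "w = (q, i)" by (cases w)
  have "(q, MainT, \<rho> q i) \<in> all_tops M D" "top_at M D (q, MainT, \<rho> q i) = TBcast (wupd w) (wlab w)"
    using W1[of q i] w wq all_tops_M by auto
  then have "\<exists>a \<in> tops_of M D p. top_at M D a = TDeliver (wupd w) (wlab w)" using bd by blast
  then obtain a where a: "a \<in> set (LT p)" "top_at M D a = TDeliver (wupd w) (wlab w)" using LTs by blast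
  from inT_cases[OF a(1)] show ?thesis
  proof
    assume "\<exists>m. a = (p, MainT, m) \<and> m < length (M p)"
    then obtain m where "a = (p, MainT, m)" "m < length (M p)" by blast
    then show ?thesis using Mok_M[of m p] a by (simp add: Mok_def)
  next
    assume "\<exists>d. a = (p, DelT, d) \<and> d < length (D p)"
    then show ?thesis using a by auto
  qed
qed

lemma tvalid_deliv_unique: "x \<in> set (LT p) \<Longrightarrow> y \<in> set (LT p) \<Longrightarrow> top_at M D x = TDeliver u l \<Longrightarrow> top_at M D y = TDeliver u l \<Longrightarrow> x = y"
proof -
  assume a: "x \<in> set (LT p)" "y \<in> set (LT p)" "top_at M D x = TDeliver u l" "top_at M D y = TDeliver u l"
  obtain j k where jk: "j < length (LT p)" "LT p ! j = x" "k < length (LT p)" "LT p ! k = y"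
    using a by (auto simp: in_set_conv_nth)
  have "j = k" using LTv[of p] jk a unfolding tvalid_def by auto
  then show ?thesis using jk by simp
qed

lemma tvalid_bcast_before: "x \<in> set (LT p) \<Longrightarrow> y \<in> set (LT p) \<Longrightarrow> top_at M D x = TBcast u l \<Longrightarrow> top_at M D y = TDeliver u l \<Longrightarrow> before (LT p) x y"
proof -
  assume a: "x \<in> set (LT p)" "y \<in> set (LT p)" "top_at M D x = TBcast u l" "top_at M D y = TDeliver u l"
  obtain j k where jk: "j < length (LT p)" "LT p ! j = x" "k < length (LT p)" "LT p ! k = y"
    using a by (auto simp: in_set_conv_nth)
  have "j < k" using LTv[of p] jk a unfolding tvalid_def by auto
  then show ?thesis using jk unfolding before_def by blast
qed

lemma W6: "d1 < length (D p) \<Longrightarrow> d2 < length (D p) \<Longrightarrow> D p ! d1 = TDeliver u l1 \<Longrightarrow> D p ! d2 = TDeliver u l2 \<Longrightarrow> d1 = d2 \<and> l1 = l2"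
proof -
  assume a: "d1 < length (D p)" "d2 < length (D p)" "D p ! d1 = TDeliver u l1" "D p ! d2 = TDeliver u l2"
  obtain w1 where w1: "w1 \<in> swrites C" "u = wupd w1" "l1 = wlab w1" using W4[OF a(1,3)] by blast
  obtain w2 where w2: "w2 \<in> swrites C" "u = wupd w2" "l2 = wlab w2" using W4[OF a(2,4)] by blast
  have "w1 = w2" using W3 w1 w2 by metis
  then have l: "l1 = l2" using w1 w2 by simp
  have "(p, DelT, d1) = (p, DelT, d2)"
    by (rule tvalid_deliv_unique[of _ p _ u l1]) (use a l inT_D in auto)
  then show ?thesis using l by simp
qed

definition dl :: "'p \<Rightarrow> 'p \<times> nat \<Rightarrow> nat" where
  "dl p w = (THE d. d < length (D p) \<and> D p ! d = TDeliver (wupd w) (wlab w))"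

lemma W7: "w \<in> swrites C \<Longrightarrow> dl p w < length (D p) \<and> D p ! dl p w = TDeliver (wupd w) (wlab w)"
proof -
  assume w: "w \<in> swrites C"
  obtain d where d: "d < length (D p)" "D p ! d = TDeliver (wupd w) (wlab w)" using W5[OF w] by blast
  have "dl p w = d" unfolding dl_def
  proof (rule the_equality)
    show "d < length (D p) \<and> D p ! d = TDeliver (wupd w) (wlab w)" using d by simp
    fix d' assume "d' < length (D p) \<and> D p ! d' = TDeliver (wupd w) (wlab w)"
    then show "d' = d" using W6[of d' p d] d by blast
  qed
  then show ?thesis using d by simp
qed

lemma W8: "w \<in> swrites C \<Longrightarrow> d < length (D p) \<Longrightarrow> D p ! d = TDeliver (wupd w) l \<Longrightarrow> d = dl p w \<and> l = wlab w"
  using W7[of w p] W6[of d p "dl p w"] by metis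

definition wof :: "('p,'var,'val) upd \<Rightarrow> 'p \<times> nat" where
  "wof u = (THE w. w \<in> swrites C \<and> wupd w = u)"

lemma W9: "w \<in> swrites C \<Longrightarrow> wof (wupd w) = w"
  unfolding wof_def by (rule the_equality) (auto intro: W3)

lemma wupd_fst: "fst w = s \<Longrightarrow> wupd w = Upd s' n x v \<Longrightarrow> s' = s"
  by (auto simp: wupd_def split: sop.splits)

lemma wupd_sop: "w \<in> swrites C \<Longrightarrow> wupd w = Upd s n x v \<Longrightarrow> sop_at C w = SWrite x v"
  by (cases w) (auto simp: wupd_def sop_at_def swrites_iff is_swrite_ex)

end

definition gWR :: "('p,'var,'val) top \<Rightarrow> nat option" where
  "gWR op = (case op of TWriteReq k \<Rightarrow> Some k | _ \<Rightarrow> None)"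
definition gRR :: "('p,'var,'val) top \<Rightarrow> nat option" where
  "gRR op = (case op of TReadReq k \<Rightarrow> Some k | _ \<Rightarrow> None)"
definition gWP :: "('p,'var,'val) top \<Rightarrow> nat option" where
  "gWP op = (case op of TWritePrc k \<Rightarrow> Some k | _ \<Rightarrow> None)"
definition gRP :: "('p,'var,'val) top \<Rightarrow> nat option" where
  "gRP op = (case op of TReadPrc k \<Rightarrow> Some k | _ \<Rightarrow> None)"

lemma req_after_lv: "req_after xs = last_val gWR xs"
  unfolding req_after_def last_val_def by (rule fold_cong) (auto simp: gWR_def split: top.split)

lemma prc_after_lv: "prc_after xs = last_val gWP xs"
  unfolding prc_after_def last_val_def by (rule fold_cong) (auto simp: gWP_def split: top.split)

context SYS begin

abbreviation TT :: "'p \<Rightarrow> ('p,'var,'val) top list" where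
  "TT p \<equiv> map (top_at M D) (LT p)"

lemma BTW: "j < q \<Longrightarrow> q < k \<Longrightarrow> k < length (LT p) \<Longrightarrow> LT p ! j = (p, t, e) \<Longrightarrow> LT p ! k = (p, t, Suc e) \<Longrightarrow> LT p ! q = (p, t, e') \<Longrightarrow> False"
proof -
  assume a: "j < q" "q < k" "k < length (LT p)" "LT p ! j = (p, t, e)" "LT p ! k = (p, t, Suc e)" "LT p ! q = (p, t, e')"
  have inj: "j < length (LT p)" "q < length (LT p)" using a by auto
  have s: "(p, t, e) \<in> set (LT p)" "(p, t, Suc e) \<in> set (LT p)" "(p, t, e') \<in> set (LT p)"
    using a inj by (metis nth_mem)+
  have "e' \<noteq> e" using distinct_nth_eq[OF LTd[of p], of j q] a inj by auto
  moreover have "e' \<noteq> Suc e" using distinct_nth_eq[OF LTd[of p], of k q] a inj by auto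
  ultimately have "e' < e \<or> Suc e < e'" by auto
  then show False
  proof
    assume "e' < e"
    then have "before (LT p) (LT p ! q) (LT p ! j)" using thr_before[OF s(3) s(1)] a by simp
    then show False using before_nth[OF LTd inj(2) inj(1)] a by simp
  next
    assume "Suc e < e'"
    then have "before (LT p) (LT p ! k) (LT p ! q)" using thr_before[OF s(2) s(3)] a by simp
    then show False using before_nth[OF LTd a(3) inj(2)] a by simp
  qed
qed

lemma nthT: "q < length (LT p) \<Longrightarrow> TT p ! q = top_at M D (LT p ! q)" by simp

lemma idx_of: "x \<in> set (LT p) \<Longrightarrow> \<exists>k < length (LT p). LT p ! k = x" by (simp add: in_set_conv_nth)

lemma CR: assumes kk: "k \<le> length (LT p)" shows "req_after (take k (TT p)) = card {q. q < k \<and> gWR (TT p ! q) \<noteq> None}"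
proof -
  have V: "r = last_val gWR (take j (TT p))" if "j < length (TT p)" "gRR (TT p ! j) = Some r" for j r
  proof -
    have "j < length (LT p)" "gRR (TT p ! j) = Some r" using that by auto
  then show "r = last_val gWR (take j (TT p))" using LTv[of p] unfolding tvalid_def req_after_lv
    by (auto simp: gRR_def split: top.splits)
  qed
  have L: "\<exists>j<k. \<exists>r. gRR (TT p ! j) = Some r \<and> v = Suc r \<and> (\<forall>q. j \<le> q \<longrightarrow> q < k \<longrightarrow> gWR (TT p ! q) = None)"
    if "k < length (TT p)" "gWR (TT p ! k) = Some v" for k v
  proof -
    have k: "k < length (LT p)" and g: "gWR (TT p ! k) = Some v" using that by auto
  then have tk: "top_at M D (LT p ! k) = TWriteReq v" by (auto simp: gWR_def split: top.splits)
  have xs: "LT p ! k \<in> set (LT p)" using k by simp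
  from inT_cases[OF xs] obtain m where x: "LT p ! k = (p, MainT, m)" "m < length (M p)"
    using Dp(1) tk by force
  have Mm: "M p ! m = TWriteReq v" using tk x by simp
  obtain i where i: "i < length (C p)" "is_swrite (C p ! i)" "\<rho> p i = Suc m" using MS_D5c[OF ms x(2) Mm] by blast
  then obtain xx vv where c: "C p ! i = SWrite xx vv" by (auto simp: is_swrite_ex)
  obtain r where r: "M p ! (\<rho> p i - 1) = TWriteReq (Suc r)" "M p ! (\<rho> p i - 2) = TReadReq r" "2 \<le> \<rho> p i"
    using MS_D4[OF ms i(1) c] by blast
  have m1: "0 < m" "M p ! (m - 1) = TReadReq r" "v = Suc r" using r i Mm by (auto simp: numeral_eq_Suc)
  have ys: "(p, MainT, m - 1) \<in> set (LT p)" using inT_M x m1 by auto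
  obtain j where j: "j < length (LT p)" "LT p ! j = (p, MainT, m - 1)" using idx_of[OF ys] by blast
  have "before (LT p) (LT p ! j) (LT p ! k)" using thr_before[OF ys, of m] x j m1 xs by simp
  then have jk: "j < k" using before_nth[OF LTd j(1) k] by simp
  show "\<exists>j<k. \<exists>r. gRR (TT p ! j) = Some r \<and> v = Suc r \<and> (\<forall>q. j \<le> q \<longrightarrow> q < k \<longrightarrow> gWR (TT p ! q) = None)"
  proof (intro exI conjI allI impI)
    show "j < k" by (rule jk)
    show "gRR (TT p ! j) = Some r" using j m1 by (simp add: gRR_def)
    show "v = Suc r" using m1 by simp
    fix q assume q: "j \<le> q" "q < k"
    show "gWR (TT p ! q) = None"
    proof (cases "q = j")
      case True then show ?thesis using j m1 by (simp add: gWR_def)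
    next
      case False
      show ?thesis
      proof (rule ccontr)
        assume "gWR (TT p ! q) \<noteq> None"
        then obtain v' where tq: "top_at M D (LT p ! q) = TWriteReq v'" using q k by (auto simp: gWR_def split: top.splits)
        have qs: "LT p ! q \<in> set (LT p)" using q k by simp
        from inT_cases[OF qs] obtain m' where "LT p ! q = (p, MainT, m')" using Dp(1) tq by force
        moreover have "m = Suc (m - 1)" using m1 by simp
        ultimately show False using BTW[of j q k p MainT "m - 1" m'] j x q False k by simp
      qed
    qed
  qed
  qed
  show ?thesis unfolding req_after_lv using counter[where xs = "TT p" and gR = gRR and gW = gWR, OF V L] kk by simp
qed

lemma CP: assumes kk: "k \<le> length (LT p)" shows "prc_after (take k (TT p)) = card {q. q < k \<and> gWP (TT p ! q) \<noteq> None}"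
proof -
  have V: "r = last_val gWP (take j (TT p))" if "j < length (TT p)" "gRP (TT p ! j) = Some r" for j r
  proof -
    have "j < length (LT p)" "gRP (TT p ! j) = Some r" using that by auto
  then show "r = last_val gWP (take j (TT p))" using LTv[of p] unfolding tvalid_def prc_after_lv
    by (auto simp: gRP_def split: top.splits)
  qed
  have L: "\<exists>j<k. \<exists>r. gRP (TT p ! j) = Some r \<and> v = Suc r \<and> (\<forall>q. j \<le> q \<longrightarrow> q < k \<longrightarrow> gWP (TT p ! q) = None)"
    if "k < length (TT p)" "gWP (TT p ! k) = Some v" for k v
  proof -
    have k: "k < length (LT p)" and g: "gWP (TT p ! k) = Some v" using that by auto
  then have tk: "top_at M D (LT p ! k) = TWritePrc v" by (auto simp: gWP_def split: top.splits)
  have xs: "LT p ! k \<in> set (LT p)" using k by simp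
  from inT_cases[OF xs] obtain d where x: "LT p ! k = (p, DelT, d)" "d < length (D p)"
    using Mok_M tk by (force simp: Mok_def)
  have Dd: "D p ! d = TWritePrc v" using tk x by simp
  obtain r where r: "3 \<le> d" "v = Suc r" "D p ! (d - 1) = TReadPrc r" using Dp(4)[OF x(2) Dd] by blast
  have ys: "(p, DelT, d - 1) \<in> set (LT p)" using inT_D x by auto
  obtain j where j: "j < length (LT p)" "LT p ! j = (p, DelT, d - 1)" using idx_of[OF ys] by blast
  have "before (LT p) (LT p ! j) (LT p ! k)" using thr_before[OF ys, of d] x j r xs by simp
  then have jk: "j < k" using before_nth[OF LTd j(1) k] by simp
  show "\<exists>j<k. \<exists>r. gRP (TT p ! j) = Some r \<and> v = Suc r \<and> (\<forall>q. j \<le> q \<longrightarrow> q < k \<longrightarrow> gWP (TT p ! q) = None)"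
  proof (intro exI conjI allI impI)
    show "j < k" by (rule jk)
    show "gRP (TT p ! j) = Some r" using j r by (simp add: gRP_def)
    show "v = Suc r" using r by simp
    fix q assume q: "j \<le> q" "q < k"
    show "gWP (TT p ! q) = None"
    proof (cases "q = j")
      case True then show ?thesis using j r by (simp add: gWP_def)
    next
      case False
      show ?thesis
      proof (rule ccontr)
        assume "gWP (TT p ! q) \<noteq> None"
        then obtain v' where tq: "top_at M D (LT p ! q) = TWritePrc v'" using q k by (auto simp: gWP_def split: top.splits)
        have qs: "LT p ! q \<in> set (LT p)" using q k by simp
        from inT_cases[OF qs] obtain d' where "LT p ! q = (p, DelT, d')" using Mok_M tq by (force simp: Mok_def)
        moreover have "d = Suc (d - 1)" using r by simp
        ultimately show False using BTW[of j q k p DelT "d - 1" d'] j x q False k by simp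
      qed
    qed
  qed
  qed
  show ?thesis unfolding prc_after_lv using counter[where xs = "TT p" and gR = gRP and gW = gWP, OF V L] kk by simp
qed

end

context SYS begin

lemma wait_pos: "i < j \<Longrightarrow> j < length (C p) \<Longrightarrow> is_swrite (C p ! i) \<Longrightarrow> \<not> is_swrite (C p ! j) \<Longrightarrow>
  \<exists>w. \<rho> p i < w \<and> Suc w < \<rho> p j \<and> wait_at (M p) w"
proof -
  assume a: "i < j" "j < length (C p)" "is_swrite (C p ! i)" "\<not> is_swrite (C p ! j)"
  show ?thesis
  proof (cases tr)
    case SWFR
    then obtain w where "\<rho> p i < w" "wait_at (M p) w" "\<forall>j'. i < j' \<longrightarrow> j' < length (C p) \<longrightarrow> Suc w < \<rho> p j'"
      using MS_D6[OF ms[of p] SWFR, of i] a by auto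
    then show ?thesis using a by blast
  next
    case FWSR
    then obtain w where "Suc w < \<rho> p j" "wait_at (M p) w" "\<forall>i'<j. \<rho> p i' < w"
      using MS_D7[OF ms[of p] FWSR, of j] a by auto
    then show ?thesis using a by blast
  qed
qed

definition dupd :: "('p,'var,'val) top \<Rightarrow> ('p,'var,'val) upd" where
  "dupd op = (case op of TDeliver u l \<Rightarrow> u)"

lemma wait_deliv:
  assumes a: "i < j" "j < length (C p)" "is_swrite (C p ! i)" "\<not> is_swrite (C p ! j)"
  shows "Suc (dl p (p, i)) < length (D p) \<and> before (LT p) (p, DelT, Suc (dl p (p, i))) (p, MainT, \<rho> p j)"
proof -
  obtain w where w: "\<rho> p i < w" "Suc w < \<rho> p j" "wait_at (M p) w" using wait_pos[OF a] by blast
  obtain pa c where wa: "Suc w < length (M p)" "M p ! w = TReadPrc pa" "M p ! Suc w = TReadReq c" "c \<le> pa"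
    using w(3) unfolding wait_at_def by blast
  have jl: "\<rho> p j < length (M p)" using MS_D2[OF ms a(2)] .
  have xw: "(p, MainT, w) \<in> set (LT p)" and xc: "(p, MainT, Suc w) \<in> set (LT p)" and xj: "(p, MainT, \<rho> p j) \<in> set (LT p)"
    using wa jl inT_M by auto
  obtain kw where kw: "kw < length (LT p)" "LT p ! kw = (p, MainT, w)" using idx_of[OF xw] by blast
  obtain kc where kc: "kc < length (LT p)" "LT p ! kc = (p, MainT, Suc w)" using idx_of[OF xc] by blast
  have pa: "pa = prc_after (take kw (TT p))" using LTv[of p] kw wa unfolding tvalid_def by auto
  have cc: "c = req_after (take kc (TT p))" using LTv[of p] kc wa unfolding tvalid_def by auto
  define PS where "PS = {x. before (LT p) x (p, MainT, w) \<and> gWP (top_at M D x) \<noteq> None}"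
  define RS where "RS = {x. before (LT p) x (p, MainT, Suc w) \<and> gWR (top_at M D x) \<noteq> None}"
  define IW where "IW = {i'. i' < length (C p) \<and> is_swrite (C p ! i') \<and> \<rho> p i' < w}"
  have paPS: "pa = card PS"
  proof -
    have "pa = card {q. q < kw \<and> gWP (TT p ! q) \<noteq> None}" using pa CP[of kw p] kw by simp
    also have "\<dots> = card {q. q < kw \<and> gWP (top_at M D (LT p ! q)) \<noteq> None}"
      by (rule arg_cong[where f = card]) (use kw in auto)
    also have "\<dots> = card PS" unfolding PS_def using card_idx_set[OF LTd kw(1), of "\<lambda>x. gWP (top_at M D x) \<noteq> None"] kw by simp
    finally show ?thesis .
  qed
  have cRS: "c = card RS"
  proof -
    have "c = card {q. q < kc \<and> gWR (TT p ! q) \<noteq> None}" using cc CR[of kc p] kc by simp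
    also have "\<dots> = card {q. q < kc \<and> gWR (top_at M D (LT p ! q)) \<noteq> None}"
      by (rule arg_cong[where f = card]) (use kc in auto)
    also have "\<dots> = card RS" unfolding RS_def using card_idx_set[OF LTd kc(1), of "\<lambda>x. gWR (top_at M D x) \<noteq> None"] kc by simp
    finally show ?thesis .
  qed
  have finIW: "finite IW" unfolding IW_def by simp
  have RSimg: "RS = (\<lambda>i'. (p, MainT, \<rho> p i' - 1)) ` IW"
  proof (intro set_eqI iffI)
    fix x assume "x \<in> RS"
    then have bx: "before (LT p) x (p, MainT, Suc w)" and gx: "gWR (top_at M D x) \<noteq> None" unfolding RS_def by auto
    have xs: "x \<in> set (LT p)" using before_in[OF bx] by simp
    from inT_cases[OF xs] obtain m where x: "x = (p, MainT, m)" "m < length (M p)"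
      using Dp(1) gx by (force simp: gWR_def split: top.splits)
    obtain k where Mm: "M p ! m = TWriteReq k" using gx x by (auto simp: gWR_def split: top.splits)
    obtain i' where i': "i' < length (C p)" "is_swrite (C p ! i')" "\<rho> p i' = Suc m" using MS_D5c[OF ms x(2) Mm] by blast
    then obtain xx vv where ci': "C p ! i' = SWrite xx vv" by (auto simp: is_swrite_ex)
    have bc: "M p ! \<rho> p i' = TBcast (Upd p (0 + nw (C p) i') xx vv) (label Ks xx)" using MS_D4[OF ms i'(1) ci'] by blast
    have "m < Suc w" using thr_before_iff[of p MainT m "Suc w"] xs xc x bx by simp
    then have "\<rho> p i' \<le> Suc w" using i' by simp
    moreover have "\<rho> p i' \<noteq> Suc w" using bc wa by auto
    moreover have "\<rho> p i' \<noteq> w" using bc wa by auto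
    ultimately have "\<rho> p i' < w" by simp
    then show "x \<in> (\<lambda>i'. (p, MainT, \<rho> p i' - 1)) ` IW" unfolding IW_def using i' x by (intro image_eqI[of _ _ i']) auto
  next
    fix x assume "x \<in> (\<lambda>i'. (p, MainT, \<rho> p i' - 1)) ` IW"
    then obtain i' where i': "i' < length (C p)" "is_swrite (C p ! i')" "\<rho> p i' < w" and x: "x = (p, MainT, \<rho> p i' - 1)"
      unfolding IW_def by blast
    then obtain xx vv where ci': "C p ! i' = SWrite xx vv" by (auto simp: is_swrite_ex)
    obtain r where r: "2 \<le> \<rho> p i'" "M p ! (\<rho> p i' - 1) = TWriteReq (Suc r)" using MS_D4[OF ms i'(1) ci'] by blast
    have xs: "x \<in> set (LT p)" using x inT_M wa i' by auto
    have "before (LT p) x (p, MainT, Suc w)" using thr_before[of p MainT "\<rho> p i' - 1" "Suc w"] xs xc x i' by simp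
    then show "x \<in> RS" unfolding RS_def using x r by (simp add: gWR_def)
  qed
  have injR: "inj_on (\<lambda>i'. (p, MainT, \<rho> p i' - 1)) IW"
  proof (rule inj_onI)
    fix i1 i2 assume i: "i1 \<in> IW" "i2 \<in> IW" and e: "(p, MainT, \<rho> p i1 - 1) = (p, MainT, \<rho> p i2 - 1)"
    then have c1: "i1 < length (C p)" "is_swrite (C p ! i1)" and c2: "i2 < length (C p)" "is_swrite (C p ! i2)"
      unfolding IW_def by auto
    obtain x1 v1 where "C p ! i1 = SWrite x1 v1" using c1 by (auto simp: is_swrite_ex)
    then have r1: "2 \<le> \<rho> p i1" using MS_D4[OF ms c1(1)] by blast
    obtain x2 v2 where "C p ! i2 = SWrite x2 v2" using c2 by (auto simp: is_swrite_ex)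
    then have r2: "2 \<le> \<rho> p i2" using MS_D4[OF ms c2(1)] by blast
    have "\<rho> p i1 = \<rho> p i2" using e r1 r2 by simp
    then show "i1 = i2" using MS_D1[OF ms, of i1 i2] MS_D1[OF ms, of i2 i1] c1 c2 by (metis less_irrefl nat_neq_iff)
  qed
  have cIW: "c = card IW" using cRS RSimg card_image[OF injR] by simp
  define f where "f x = snd (wof (dupd (D p ! (snd (snd x) - 3))))" for x :: "'p \<times> thr \<times> nat"
  have PSinfo: "\<exists>d. x = (p, DelT, d) \<and> d < length (D p) \<and> 3 \<le> d \<and> (p, f x) \<in> swrites C \<and> D p ! (d - 3) = TDeliver (wupd (p, f x)) (wlab (p, f x))" if "x \<in> PS" for x
  proof -
    have bx: "before (LT p) x (p, MainT, w)" and gx: "gWP (top_at M D x) \<noteq> None" using that unfolding PS_def by auto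
    have xs: "x \<in> set (LT p)" using before_in[OF bx] by simp
    from inT_cases[OF xs] obtain d where x: "x = (p, DelT, d)" "d < length (D p)"
      using Mok_M gx by (force simp: Mok_def gWP_def split: top.splits)
    obtain k where Dd: "D p ! d = TWritePrc k" using gx x by (auto simp: gWP_def split: top.splits)
    obtain n xx vv l where d3: "3 \<le> d" "D p ! (d - 3) = TDeliver (Upd p n xx vv) l" using Dp(4)[OF x(2) Dd] by blast
    obtain w' where w': "w' \<in> swrites C" "Upd p n xx vv = wupd w'" "l = wlab w'"
    proof -
      have "d - 3 < length (D p)" using x by simp
      from W4[OF this d3(2)] show ?thesis using that by blast
    qed
    have fw: "fst w' = p" using wupd_fst[of w' "fst w'" p n xx vv] w' by simp
    have "f x = snd w'" unfolding f_def using x d3 w' W9 by (simp add: dupd_def)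
    then have "w' = (p, f x)" using fw by (cases w') auto
    then show ?thesis using x d3 w' by auto
  qed
  have fPS: "f ` PS \<subseteq> IW"
  proof
    fix i' assume "i' \<in> f ` PS"
    then obtain x where x: "x \<in> PS" "i' = f x" by blast
    then obtain d where d: "x = (p, DelT, d)" "d < length (D p)" "3 \<le> d" "(p, i') \<in> swrites C"
       "D p ! (d - 3) = TDeliver (wupd (p, i')) (wlab (p, i'))" using PSinfo by blast
    have bx: "before (LT p) x (p, MainT, w)" using x unfolding PS_def by auto
    have b1: "\<rho> p i' < length (M p)" "M p ! \<rho> p i' = TBcast (wupd (p, i')) (wlab (p, i'))" using W1[OF d(4)] by auto
    have s1: "(p, MainT, \<rho> p i') \<in> set (LT p)" using b1 inT_M by auto
    have s2: "(p, DelT, d - 3) \<in> set (LT p)" and s3: "(p, DelT, d) \<in> set (LT p)" using d inT_D by auto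
    have "before (LT p) (p, MainT, \<rho> p i') (p, DelT, d - 3)" using tvalid_bcast_before[OF s1 s2] b1 d by simp
    moreover have "before (LT p) (p, DelT, d - 3) (p, DelT, d)" using thr_before[OF s2 s3] d by simp
    ultimately have "before (LT p) (p, MainT, \<rho> p i') (p, MainT, w)" using bx d before_trans[OF LTd] by metis
    then have "\<rho> p i' < w" using thr_before_iff[OF s1 xw] by simp
    then show "i' \<in> IW" unfolding IW_def using d(4) by (simp add: swrites_iff)
  qed
  have injf: "inj_on f PS"
  proof (rule inj_onI)
    fix x1 x2 assume x: "x1 \<in> PS" "x2 \<in> PS" "f x1 = f x2"
    obtain d1 where d1: "x1 = (p, DelT, d1)" "d1 < length (D p)" "3 \<le> d1" "D p ! (d1 - 3) = TDeliver (wupd (p, f x1)) (wlab (p, f x1))"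
      using PSinfo[OF x(1)] by blast
    obtain d2 where d2: "x2 = (p, DelT, d2)" "d2 < length (D p)" "3 \<le> d2" "D p ! (d2 - 3) = TDeliver (wupd (p, f x2)) (wlab (p, f x2))"
      using PSinfo[OF x(2)] by blast
    have "d1 - 3 = d2 - 3" using W6[of "d1 - 3" p "d2 - 3"] d1 d2 x(3) by auto
    then show "x1 = x2" using d1 d2 by simp
  qed
  have finPS: "finite PS"
  proof (rule finite_subset[of _ "set (LT p)"])
    show "PS \<subseteq> set (LT p)" unfolding PS_def using before_in by (metis (mono_tags, lifting) mem_Collect_eq subsetI)
  qed simp
  have "card IW \<le> card (f ` PS)" using cIW paPS wa card_image[OF injf] by simp
  then have "f ` PS = IW" using card_seteq[OF finIW fPS] by simp
  moreover have "i \<in> IW" unfolding IW_def using a w by simp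
  ultimately obtain x where x: "x \<in> PS" "f x = i" by blast
  then obtain d where d: "x = (p, DelT, d)" "d < length (D p)" "3 \<le> d" "(p, i) \<in> swrites C"
       "D p ! (d - 3) = TDeliver (wupd (p, i)) (wlab (p, i))" using PSinfo by blast
  have dd: "d - 3 = dl p (p, i)" using W8[OF d(4), of "d - 3" p] d by simp
  have s2: "(p, DelT, d - 2) \<in> set (LT p)" and s3: "(p, DelT, d) \<in> set (LT p)" using d inT_D by auto
  have "before (LT p) (p, DelT, d - 2) (p, DelT, d)" using thr_before[OF s2 s3] d by simp
  moreover have "before (LT p) (p, DelT, d) (p, MainT, w)" using x d unfolding PS_def by simp
  moreover have "before (LT p) (p, MainT, w) (p, MainT, \<rho> p j)" using thr_before[OF xw xj] w by simp
  ultimately have "before (LT p) (p, DelT, d - 2) (p, MainT, \<rho> p j)" using before_trans[OF LTd] by metis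
  moreover have "Suc (dl p (p, i)) = d - 2" using dd d by simp
  ultimately show ?thesis using d by simp
qed

end

lemma map_filter_concat: "map f (filter P xs) = concat (map (\<lambda>x. if P x then [f x] else []) xs)"
  by (induction xs) auto

context SYS begin

definition Pr :: "'p \<times> thr \<times> nat \<Rightarrow> bool" where
  "Pr x = (case top_at M D x of TReadMem _ _ \<Rightarrow> True | TWriteMem _ _ \<Rightarrow> True | _ \<Rightarrow> False)"

definition hh :: "'p \<Rightarrow> 'p \<times> thr \<times> nat \<Rightarrow> 'p \<times> nat" where
  "hh p x = (case x of (q, t, m) \<Rightarrow> (case t of MainT \<Rightarrow> (p, THE i. i < length (C p) \<and> \<rho> p i = m) | DelT \<Rightarrow> wof (dupd (D p ! (m - 1)))))"

definition ext :: "'p \<Rightarrow> ('p \<times> nat) list" where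
  "ext p = (if D p \<noteq> [] \<and> (\<exists>u l. last (D p) = TDeliver u l) then [wof (dupd (last (D p)))] else [])"

definition LL :: "'p \<Rightarrow> ('p \<times> nat) list" where
  "LL p = map (hh p) (filter Pr (LT p)) @ ext p"

lemma rho_inj: "i1 < length (C p) \<Longrightarrow> i2 < length (C p) \<Longrightarrow> \<rho> p i1 = \<rho> p i2 \<Longrightarrow> i1 = i2"
  using MS_D1[OF ms, of i1 i2 p] MS_D1[OF ms, of i2 i1 p] by (metis less_irrefl nat_neq_iff)

lemma HRd: "i < length (C p) \<Longrightarrow> C p ! i = SRead a b \<Longrightarrow>
   (p, MainT, \<rho> p i) \<in> set (LT p) \<and> Pr (p, MainT, \<rho> p i) \<and> hh p (p, MainT, \<rho> p i) = (p, i)"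
proof -
  assume i: "i < length (C p)" "C p ! i = SRead a b"
  have m: "M p ! \<rho> p i = TReadMem a b" using MS_D3[OF ms i] .
  have "(THE i'. i' < length (C p) \<and> \<rho> p i' = \<rho> p i) = i"
    by (rule the_equality) (use i rho_inj in auto)
  then show ?thesis using m MS_D2[OF ms i(1)] inT_M by (simp add: Pr_def hh_def)
qed

lemma HR: "x \<in> set (LT p) \<Longrightarrow> top_at M D x = TReadMem a b \<Longrightarrow>
   \<exists>i. x = (p, MainT, \<rho> p i) \<and> i < length (C p) \<and> C p ! i = SRead a b \<and> hh p x = (p, i)"
proof -
  assume x: "x \<in> set (LT p)" "top_at M D x = TReadMem a b"
  from inT_cases[OF x(1)] obtain m where xm: "x = (p, MainT, m)" "m < length (M p)"
    using Dp(1) x by force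
  have Mm: "M p ! m = TReadMem a b" using x xm by simp
  obtain i where i: "i < length (C p)" "\<rho> p i = m" using MS_D5a[OF ms xm(2) Mm] by blast
  have "C p ! i = SRead a b"
  proof (cases "C p ! i")
    case (SRead a' b')
    then show ?thesis using MS_D3[OF ms i(1) SRead] i Mm by simp
  next
    case (SWrite a' b')
    then show ?thesis using MS_D4[OF ms i(1) SWrite] i Mm by simp
  qed
  then show ?thesis using HRd[OF i(1)] i xm by auto
qed

lemma HW: "x \<in> set (LT p) \<Longrightarrow> top_at M D x = TWriteMem a b \<Longrightarrow>
   \<exists>w. x = (p, DelT, Suc (dl p w)) \<and> w \<in> swrites C \<and> hh p x = w \<and> sop_at C w = SWrite a b"
proof -
  assume x: "x \<in> set (LT p)" "top_at M D x = TWriteMem a b"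
  from inT_cases[OF x(1)] obtain e where xe: "x = (p, DelT, e)" "e < length (D p)"
    using Mok_M x by (force simp: Mok_def)
  have De: "D p ! e = TWriteMem a b" using x xe by simp
  obtain s n l where e: "0 < e" "D p ! (e - 1) = TDeliver (Upd s n a b) l" using Dp(3)[OF xe(2) De] by blast
  have e1: "e - 1 < length (D p)" using xe by simp
  obtain w where w: "w \<in> swrites C" "Upd s n a b = wupd w" "l = wlab w" using W4[OF e1 e(2)] by blast
  have e2: "D p ! (e - 1) = TDeliver (wupd w) l" using e(2) w(2) by metis
  have dlw: "e - 1 = dl p w" using W8[OF w(1) e1 e2] by blast
  have "hh p x = wof (dupd (D p ! (e - 1)))" using xe by (simp add: hh_def)
  also have "\<dots> = w" unfolding e2 dupd_def using W9[OF w(1)] by simp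
  finally have "hh p x = w" .
  moreover have "sop_at C w = SWrite a b" using wupd_sop[OF w(1) w(2)[symmetric]] .
  moreover have "x = (p, DelT, Suc (dl p w))" using xe e dlw by simp
  ultimately show ?thesis using w by blast
qed

lemma HD: "w \<in> swrites C \<Longrightarrow> Suc (dl p w) < length (D p) \<Longrightarrow>
   (p, DelT, Suc (dl p w)) \<in> set (LT p) \<and> Pr (p, DelT, Suc (dl p w)) \<and> hh p (p, DelT, Suc (dl p w)) = w"
proof -
  assume w: "w \<in> swrites C" "Suc (dl p w) < length (D p)"
  note d = W7[OF w(1), of p]
  obtain s n x v where u: "wupd w = Upd s n x v" "D p ! Suc (dl p w) = TWriteMem x v" using Dp(2)[OF conjunct1[OF d] conjunct2[OF d] w(2)] by blast
  have s: "(p, DelT, Suc (dl p w)) \<in> set (LT p)" using w inT_D by simp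
  obtain w' where w': "(p, DelT, Suc (dl p w)) = (p, DelT, Suc (dl p w'))" "w' \<in> swrites C" "hh p (p, DelT, Suc (dl p w)) = w'"
    using HW[OF s] u by auto
  have "dl p w = dl p w'" using w' by simp
  then have "TDeliver (wupd w) (wlab w) = TDeliver (wupd w') (wlab w')" using W7[OF w(1), of p] W7[OF w'(2), of p] by metis
  then have "wupd w = wupd w'" by simp
  then have ww: "w' = w" using W3[OF w(1) w'(2)] by simp
  have h: "hh p (p, DelT, Suc (dl p w)) = w" using w'(3) ww by (rule trans)
  have pr: "Pr (p, DelT, Suc (dl p w))" using u(2) by (simp add: Pr_def)
  show ?thesis using s h pr by blast
qed

lemma HX: "ext p = [e] \<Longrightarrow> e \<in> swrites C \<and> Suc (dl p e) = length (D p)"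
proof -
  assume ex: "ext p = [e]"
  then have ne: "D p \<noteq> []" and "\<exists>u l. last (D p) = TDeliver u l" and ee: "e = wof (dupd (last (D p)))"
    unfolding ext_def by (auto split: if_splits)
  then obtain u l where lst: "last (D p) = TDeliver u l" by blast
  have L: "length (D p) - 1 < length (D p)" "D p ! (length (D p) - 1) = TDeliver u l" using ne lst by (auto simp: last_conv_nth)
  obtain w where w: "w \<in> swrites C" "u = wupd w" "l = wlab w" using W4[OF L] by blast
  have "dupd (last (D p)) = u" unfolding lst dupd_def by simp
  then have "e = wof (wupd w)" using ee w(2) by simp
  then have ew: "e = w" using W9[OF w(1)] by simp
  have L2: "D p ! (length (D p) - 1) = TDeliver (wupd w) l" using L(2) w(2) by simp
  have "length (D p) - 1 = dl p w" using W8[OF w(1) L(1) L2] by blast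
  moreover have "length (D p) \<noteq> 0" using ne by simp
  ultimately have "Suc (dl p w) = length (D p)" by linarith
  then show ?thesis using w(1) ew by simp
qed

lemma HX2: "w \<in> swrites C \<Longrightarrow> Suc (dl p w) = length (D p) \<Longrightarrow> ext p = [w]"
proof -
  assume w: "w \<in> swrites C" "Suc (dl p w) = length (D p)"
  have ne: "D p \<noteq> []" using w by auto
  have "length (D p) - 1 = dl p w" using w(2) by linarith
  then have "last (D p) = D p ! dl p w" using ne by (simp add: last_conv_nth)
  then have "last (D p) = TDeliver (wupd w) (wlab w)" using W7[OF w(1)] by simp
  then show ?thesis unfolding ext_def using ne W9[OF w(1)] by (simp add: dupd_def)
qed

lemma ext_cases: "ext p = [] \<or> (\<exists>e. ext p = [e])" unfolding ext_def by auto

lemma hh_inj: "inj_on (hh p) (set (filter Pr (LT p)))"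
proof (rule inj_onI)
  fix x1 x2 assume x: "x1 \<in> set (filter Pr (LT p))" "x2 \<in> set (filter Pr (LT p))" "hh p x1 = hh p x2"
  have s: "x1 \<in> set (LT p)" "x2 \<in> set (LT p)" "Pr x1" "Pr x2" using x by auto
  have c1: "(\<exists>a b. top_at M D x1 = TReadMem a b) \<or> (\<exists>a b. top_at M D x1 = TWriteMem a b)"
    using s(3) by (auto simp: Pr_def split: top.splits)
  have c2: "(\<exists>a b. top_at M D x2 = TReadMem a b) \<or> (\<exists>a b. top_at M D x2 = TWriteMem a b)"
    using s(4) by (auto simp: Pr_def split: top.splits)
  show "x1 = x2"
  proof (cases "\<exists>a b. top_at M D x1 = TReadMem a b")
    case True
    then obtain a b where "top_at M D x1 = TReadMem a b" by blast
    from HR[OF s(1) this] obtain i where i: "x1 = (p, MainT, \<rho> p i)" "i < length (C p)" "C p ! i = SRead a b" "hh p x1 = (p, i)" by blast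
    show ?thesis
    proof (cases "\<exists>a b. top_at M D x2 = TReadMem a b")
      case True
      then obtain a' b' where "top_at M D x2 = TReadMem a' b'" by blast
      from HR[OF s(2) this] obtain i' where "x2 = (p, MainT, \<rho> p i')" "hh p x2 = (p, i')" by blast
      then show ?thesis using i x(3) by simp
    next
      case False
      then obtain a' b' where "top_at M D x2 = TWriteMem a' b'" using c2 by blast
      from HW[OF s(2) this] obtain w where ww: "w \<in> swrites C" "hh p x2 = w" by blast
      have "(p, i) = w" using i(4) x(3) ww(2) by simp
      then have "(p, i) \<in> swrites C" using ww(1) by simp
      then show ?thesis using i by (simp add: swrites_iff)
    qed
  next
    case False
    then obtain a b where "top_at M D x1 = TWriteMem a b" using c1 by blast
    from HW[OF s(1) this] obtain w where w: "x1 = (p, DelT, Suc (dl p w))" "w \<in> swrites C" "hh p x1 = w" by blast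
    show ?thesis
    proof (cases "\<exists>a b. top_at M D x2 = TReadMem a b")
      case True
      then obtain a' b' where "top_at M D x2 = TReadMem a' b'" by blast
      from HR[OF s(2) this] obtain i' where ii: "i' < length (C p)" "C p ! i' = SRead a' b'" "hh p x2 = (p, i')" by blast
      have "(p, i') = w" using ii(3) x(3) w(3) by simp
      then have "(p, i') \<in> swrites C" using w(2) by simp
      then show ?thesis using ii by (simp add: swrites_iff)
    next
      case False
      then obtain a' b' where "top_at M D x2 = TWriteMem a' b'" using c2 by blast
      from HW[OF s(2) this] obtain w' where "x2 = (p, DelT, Suc (dl p w'))" "hh p x2 = w'" by blast
      then show ?thesis using w x(3) by simp
    qed
  qed
qed

lemma LL_distinct: "distinct (LL p)"
proof -
  have d1: "distinct (map (hh p) (filter Pr (LT p)))" using hh_inj LTd by (simp add: distinct_map)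
  show ?thesis
  proof (cases "ext p = []")
    case True then show ?thesis using d1 by (simp add: LL_def)
  next
    case False
    then obtain e where e: "ext p = [e]" using ext_cases by blast
    note ex = HX[OF e]
    have "e \<notin> set (map (hh p) (filter Pr (LT p)))"
    proof
      assume "e \<in> set (map (hh p) (filter Pr (LT p)))"
      then obtain x where x: "x \<in> set (LT p)" "Pr x" "hh p x = e" by auto
      have "(\<exists>a b. top_at M D x = TReadMem a b) \<or> (\<exists>a b. top_at M D x = TWriteMem a b)"
        using x(2) by (auto simp: Pr_def split: top.splits)
      then show False
      proof
        assume "\<exists>a b. top_at M D x = TReadMem a b"
        then obtain a b where "top_at M D x = TReadMem a b" by blast
        from HR[OF x(1) this] obtain i where ii: "i < length (C p)" "C p ! i = SRead a b" "hh p x = (p, i)" by blast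
        have "(p, i) = e" using ii(3) x(3) by simp
        then have "(p, i) \<in> swrites C" using ex by simp
        then show False using ii by (simp add: swrites_iff)
      next
        assume "\<exists>a b. top_at M D x = TWriteMem a b"
        then obtain a b where "top_at M D x = TWriteMem a b" by blast
        from HW[OF x(1) this] obtain w where w: "x = (p, DelT, Suc (dl p w))" "hh p x = w" by blast
        then have "Suc (dl p e) < length (D p)" using x inT_D by auto
        then show False using ex by simp
      qed
    qed
    then show ?thesis using d1 e by (simp add: LL_def)
  qed
qed

lemma BL1: "x \<in> set (LT p) \<Longrightarrow> y \<in> set (LT p) \<Longrightarrow> Pr x \<Longrightarrow> Pr y \<Longrightarrow> before (LT p) x y \<Longrightarrow> before (LL p) (hh p x) (hh p y)"
proof -
  assume a: "x \<in> set (LT p)" "y \<in> set (LT p)" "Pr x" "Pr y" "before (LT p) x y"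
  have "before (filter Pr (LT p)) x y" using a by (simp add: before_filter)
  then have "before (map (hh p) (filter Pr (LT p))) (hh p x) (hh p y)" using before_map[OF hh_inj] a by simp
  then show ?thesis unfolding LL_def by (rule before_app_left)
qed

lemma BL2: "x \<in> set (LT p) \<Longrightarrow> Pr x \<Longrightarrow> ext p = [e] \<Longrightarrow> before (LL p) (hh p x) e"
  unfolding LL_def by (auto intro: before_app_end)

lemma WO: "w1 \<in> swrites C \<Longrightarrow> w2 \<in> swrites C \<Longrightarrow> dl p w1 < dl p w2 \<Longrightarrow> before (LL p) w1 w2"
proof -
  assume w: "w1 \<in> swrites C" "w2 \<in> swrites C" "dl p w1 < dl p w2"
  have l2: "dl p w2 < length (D p)" using W7[OF w(2)] by simp
  note H1 = HD[OF w(1), of p]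
  have s1: "Suc (dl p w1) < length (D p)" using w l2 by simp
  show ?thesis
  proof (cases "Suc (dl p w2) < length (D p)")
    case True
    note H2 = HD[OF w(2) True]
    have "before (LT p) (p, DelT, Suc (dl p w1)) (p, DelT, Suc (dl p w2))"
      using thr_before H1[OF s1] H2 w by simp
    then show ?thesis using BL1 H1[OF s1] H2 by metis
  next
    case False
    then have "ext p = [w2]" using HX2[OF w(2)] l2 by simp
    then show ?thesis using BL2 H1[OF s1] by metis
  qed
qed

lemma WO': "w1 \<in> swrites C \<Longrightarrow> w2 \<in> swrites C \<Longrightarrow> before (LL p) w1 w2 \<Longrightarrow> dl p w1 < dl p w2"
proof (rule ccontr)
  assume w: "w1 \<in> swrites C" "w2 \<in> swrites C" "before (LL p) w1 w2" "\<not> dl p w1 < dl p w2"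
  then have "dl p w2 < dl p w1 \<or> dl p w1 = dl p w2" by auto
  then show False
  proof
    assume "dl p w2 < dl p w1"
    then have "before (LL p) w2 w1" using WO w by blast
    then show False using before_asym[OF LL_distinct] w by blast
  next
    assume "dl p w1 = dl p w2"
    then have "TDeliver (wupd w1) (wlab w1) = TDeliver (wupd w2) (wlab w2)" using W7[OF w(1), of p] W7[OF w(2), of p] by metis
    then have "wupd w1 = wupd w2" by simp
    then have "w1 = w2" using W3[OF w(1) w(2)] by simp
    then show False using before_irrefl[OF LL_distinct] w by blast
  qed
qed

end

context SYS begin

lemma LL_set: "set (LL p) = sops_of C p \<union> swrites C"
proof (intro set_eqI iffI)
  fix y assume "y \<in> set (LL p)"
  then have "y \<in> hh p ` set (filter Pr (LT p)) \<or> y \<in> set (ext p)" unfolding LL_def by auto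
  then show "y \<in> sops_of C p \<union> swrites C"
  proof
    assume "y \<in> hh p ` set (filter Pr (LT p))"
    then obtain x where x: "x \<in> set (LT p)" "Pr x" "y = hh p x" by auto
    have "(\<exists>a b. top_at M D x = TReadMem a b) \<or> (\<exists>a b. top_at M D x = TWriteMem a b)"
      using x(2) by (auto simp: Pr_def split: top.splits)
    then show ?thesis
    proof
      assume "\<exists>a b. top_at M D x = TReadMem a b"
      then obtain a b where "top_at M D x = TReadMem a b" by blast
      from HR[OF x(1) this] obtain i where "i < length (C p)" "hh p x = (p, i)" by blast
      then show ?thesis using x(3) by (simp add: sops_of_def)
    next
      assume "\<exists>a b. top_at M D x = TWriteMem a b"
      then obtain a b where "top_at M D x = TWriteMem a b" by blast
      from HW[OF x(1) this] obtain w where "w \<in> swrites C" "hh p x = w" by blast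
      then show ?thesis using x(3) by simp
    qed
  next
    assume "y \<in> set (ext p)"
    then have "ext p = [y]" using ext_cases[of p] by auto
    then show ?thesis using HX by blast
  qed
next
  fix y assume y: "y \<in> sops_of C p \<union> swrites C"
  have W: "y \<in> set (LL p)" if w: "y \<in> swrites C"
  proof (cases "Suc (dl p y) < length (D p)")
    case True
    note H = HD[OF w True]
    have m: "(p, DelT, Suc (dl p y)) \<in> set (filter Pr (LT p))" using H by simp
    have "hh p (p, DelT, Suc (dl p y)) \<in> set (map (hh p) (filter Pr (LT p)))" using imageI[OF m, of "hh p"] by simp
    then show ?thesis using H unfolding LL_def by simp
  next
    case False
    then have "Suc (dl p y) = length (D p)" using W7[OF w, of p] by simp
    then have "ext p = [y]" using HX2[OF w] by simp
    then show ?thesis unfolding LL_def by simp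
  qed
  show "y \<in> set (LL p)"
  proof (cases "y \<in> swrites C")
    case True then show ?thesis using W by blast
  next
    case False
    then obtain i where i: "y = (p, i)" "i < length (C p)" using y by (auto simp: sops_of_def)
    then have "\<not> is_swrite (C p ! i)" using False by (simp add: swrites_iff)
    then obtain a b where c: "C p ! i = SRead a b" by (cases "C p ! i") auto
    note H = HRd[OF i(2) c]
    have m: "(p, MainT, \<rho> p i) \<in> set (filter Pr (LT p))" using H by simp
    have "hh p (p, MainT, \<rho> p i) \<in> set (map (hh p) (filter Pr (LT p)))" using imageI[OF m, of "hh p"] by simp
    then show ?thesis using H i unfolding LL_def by simp
  qed
qed

lemma LL_prog: "a \<in> set (LL p) \<Longrightarrow> b \<in> set (LL p) \<Longrightarrow> sprog a b \<Longrightarrow> before (LL p) a b"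
proof -
  assume a: "a \<in> set (LL p)" "b \<in> set (LL p)" "sprog a b"
  obtain q i j where ab: "a = (q, i)" "b = (q, j)" "i < j" using a(3) unfolding sprog_def by (cases a, cases b) auto
  have ma: "a \<in> sops_of C p \<union> swrites C" and mb: "b \<in> sops_of C p \<union> swrites C" using a LL_set by auto
  have rd: "q = p \<and> k < length (C p) \<and> (\<exists>x v. C p ! k = SRead x v)" if "(q, k) \<in> sops_of C p \<union> swrites C" "(q, k) \<notin> swrites C" for k
  proof -
    have "q = p" "k < length (C p)" using that by (auto simp: sops_of_def)
    moreover then have "\<not> is_swrite (C p ! k)" using that by (simp add: swrites_iff)
    ultimately show ?thesis by (cases "C p ! k") auto
  qed
  show ?thesis
  proof (cases "a \<in> swrites C")
    case wa: True
    show ?thesis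
    proof (cases "b \<in> swrites C")
      case wb: True
      have ia: "i < length (C q)" and jb: "j < length (C q)" using wa wb ab by (auto simp: swrites_iff)
      note Ba = W1[of q i] and Bb = W1[of q j]
      have c1: "(q, MainT, \<rho> q i) \<in> all_tops M D" "(q, MainT, \<rho> q j) \<in> all_tops M D"
        using Ba Bb wa wb ab all_tops_M by auto
      have tp: "tprog (q, MainT, \<rho> q i) (q, MainT, \<rho> q j)" using MS_D1[OF ms ab(3) jb] by (simp add: tprog_def)
      note Da = W7[OF wa, of p] and Db = W7[OF wb, of p]
      have t1: "top_at M D (q, MainT, \<rho> q i) = TBcast (wupd a) (wlab a)" using Ba wa ab by simp
      have t2: "top_at M D (q, MainT, \<rho> q j) = TBcast (wupd b) (wlab b)" using Bb wb ab by simp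
      have "\<exists>c\<in>all_tops M D. \<exists>d\<in>all_tops M D. tprog c d \<and> top_at M D c = TBcast (wupd a) (wlab a) \<and> top_at M D d = TBcast (wupd b) (wlab b)"
        using c1 tp t1 t2 by blast
      moreover have "top_at M D (p, DelT, dl p a) = TDeliver (wupd a) (wlab a)" "top_at M D (p, DelT, dl p b) = TDeliver (wupd b) (wlab b)"
        using Da Db by auto
      ultimately have "delOrder M D (p, DelT, dl p a) (p, DelT, dl p b)"
        unfolding delOrder_def by blast
      moreover have s: "(p, DelT, dl p a) \<in> set (LT p)" "(p, DelT, dl p b) \<in> set (LT p)" using Da Db inT_D by auto
      ultimately have "before (LT p) (p, DelT, dl p a) (p, DelT, dl p b)" using LTo by blast
      then have "dl p a < dl p b" using thr_before_iff[OF s] by simp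
      then show ?thesis using WO wa wb by blast
    next
      case wb: False
      from rd[of j] mb wb ab have pb: "q = p" "j < length (C p)" "\<exists>x v. C p ! j = SRead x v" by auto
      then obtain x v where cj: "C p ! j = SRead x v" by blast
      have "i < length (C p)" "is_swrite (C p ! i)" using wa ab pb by (auto simp: swrites_iff)
      then have "\<not> is_swrite (C p ! j)" using cj by simp
      note WD = wait_deliv[OF ab(3) pb(2) \<open>is_swrite (C p ! i)\<close> this]
      have wa': "(p, i) \<in> swrites C" using wa ab pb by simp
      note H1 = HD[OF wa' conjunct1[OF WD]]
      note H2 = HRd[OF pb(2) cj]
      have "before (LL p) (hh p (p, DelT, Suc (dl p (p, i)))) (hh p (p, MainT, \<rho> p j))"
        using BL1 H1 H2 WD by blast
      then show ?thesis using H1 H2 ab pb by simp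
    qed
  next
    case wa: False
    from rd[of i] ma wa ab have pa: "q = p" "i < length (C p)" "\<exists>x v. C p ! i = SRead x v" by auto
    then obtain x v where ci: "C p ! i = SRead x v" by blast
    note H1 = HRd[OF pa(2) ci]
    show ?thesis
    proof (cases "b \<in> swrites C")
      case wb: True
      have jb: "j < length (C p)" using wb ab pa by (auto simp: swrites_iff)
      have wb': "(p, j) \<in> swrites C" using wb ab pa by simp
      note Bb = W1[OF wb']
      note Db = W7[OF wb', of p]
      have sb: "(p, MainT, \<rho> p j) \<in> set (LT p)" "(p, DelT, dl p (p, j)) \<in> set (LT p)" using Bb Db inT_M inT_D by auto
      have "before (LT p) (p, MainT, \<rho> p i) (p, MainT, \<rho> p j)"
        using thr_before[OF conjunct1[OF H1] sb(1)] MS_D1[OF ms ab(3) jb] by simp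
      moreover have "before (LT p) (p, MainT, \<rho> p j) (p, DelT, dl p (p, j))"
        using tvalid_bcast_before[OF sb] Bb Db by simp
      ultimately have b1: "before (LT p) (p, MainT, \<rho> p i) (p, DelT, dl p (p, j))" using before_trans[OF LTd] by blast
      show ?thesis
      proof (cases "Suc (dl p (p, j)) < length (D p)")
        case True
        note H2 = HD[OF wb' True]
        have "before (LT p) (p, DelT, dl p (p, j)) (p, DelT, Suc (dl p (p, j)))"
          using thr_before[OF sb(2) conjunct1[OF H2]] by simp
        then have "before (LT p) (p, MainT, \<rho> p i) (p, DelT, Suc (dl p (p, j)))" using b1 before_trans[OF LTd] by blast
        then have "before (LL p) (hh p (p, MainT, \<rho> p i)) (hh p (p, DelT, Suc (dl p (p, j))))"
          using BL1 H1 H2 by blast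
        then show ?thesis using H1 H2 ab pa by simp
      next
        case False
        then have "ext p = [(p, j)]" using HX2[OF wb'] Db by simp
        then have "before (LL p) (hh p (p, MainT, \<rho> p i)) (p, j)" using BL2 H1 by blast
        then show ?thesis using H1 ab pa by simp
      qed
    next
      case wb: False
      from rd[of j] mb wb ab have pb: "q = p" "j < length (C p)" "\<exists>x v. C p ! j = SRead x v" by auto
      then obtain x' v' where cj: "C p ! j = SRead x' v'" by blast
      note H2 = HRd[OF pb(2) cj]
      have "before (LT p) (p, MainT, \<rho> p i) (p, MainT, \<rho> p j)"
        using thr_before[OF conjunct1[OF H1] conjunct1[OF H2]] MS_D1[OF ms ab(3) pb(2)] by simp
      then have "before (LL p) (hh p (p, MainT, \<rho> p i)) (hh p (p, MainT, \<rho> p j))" using BL1 H1 H2 by blast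
      then show ?thesis using H1 H2 ab pa by simp
    qed
  qed
qed

lemma phi_x: "x \<in> set (LT p) \<Longrightarrow> (if Pr x then [sop_at C (hh p x)] else []) = phi (top_at M D x)"
proof -
  assume x: "x \<in> set (LT p)"
  show ?thesis
  proof (cases "top_at M D x")
    case (TReadMem a b)
    from HR[OF x TReadMem] obtain i where "i < length (C p)" "C p ! i = SRead a b" "hh p x = (p, i)" by blast
    then show ?thesis using TReadMem by (simp add: Pr_def sop_at_def)
  next
    case (TWriteMem a b)
    from HW[OF x TWriteMem] obtain w where "hh p x = w" "sop_at C w = SWrite a b" by blast
    then show ?thesis using TWriteMem by (simp add: Pr_def)
  qed (simp_all add: Pr_def)
qed

lemma LL_valid: "valid_seq init (map (sop_at C) (LL p))"
proof -
  have "map (sop_at C) (map (hh p) (filter Pr (LT p))) = map (\<lambda>x. sop_at C (hh p x)) (filter Pr (LT p))" by simp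
  also have "\<dots> = concat (map (\<lambda>x. if Pr x then [sop_at C (hh p x)] else []) (LT p))" by (rule map_filter_concat)
  also have "\<dots> = concat (map (\<lambda>x. phi (top_at M D x)) (LT p))"
    by (rule arg_cong[where f = concat], rule map_cong) (auto simp: phi_x)
  also have "\<dots> = concat (map phi (TT p))" by (simp add: comp_def)
  finally have e: "map (sop_at C) (map (hh p) (filter Pr (LT p))) = concat (map phi (TT p))" .
  have "\<forall>k<length (TT p). \<forall>x v. TT p ! k = TReadMem x v \<longrightarrow> v = tmem_after init (take k (TT p)) x"
    using LTv[of p] unfolding tvalid_def by blast
  then have v: "valid_seq init (concat (map phi (TT p)))" by (rule valid_phi)
  have ew: "\<forall>op\<in>set (map (sop_at C) (ext p)). is_swrite op"
  proof
    fix op assume "op \<in> set (map (sop_at C) (ext p))"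
    then obtain e where "e \<in> set (ext p)" "op = sop_at C e" by auto
    then have "ext p = [e]" "op = sop_at C e" using ext_cases[of p] by auto
    then have "e \<in> swrites C" "op = sop_at C e" using HX by auto
    then show "is_swrite op" by (cases e) (simp add: swrites_iff sop_at_def)
  qed
  show ?thesis unfolding LL_def map_append e using valid_seq_app_writes[OF v ew] .
qed

lemma DB: "a \<in> swrites C \<Longrightarrow> b \<in> swrites C \<Longrightarrow> wlab a = Some l \<Longrightarrow> wlab b = Some l \<Longrightarrow>
  del_before M D (LT p) (wupd a) (wupd b) l \<longleftrightarrow> dl p a < dl p b"
proof
  assume w: "a \<in> swrites C" "b \<in> swrites C" "wlab a = Some l" "wlab b = Some l"
    and "del_before M D (LT p) (wupd a) (wupd b) l"
  then obtain x y where xy: "before (LT p) x y" "top_at M D x = TDeliver (wupd a) (Some l)" "top_at M D y = TDeliver (wupd b) (Some l)"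
    unfolding del_before_def by blast
  have xs: "x \<in> set (LT p)" "y \<in> set (LT p)" using before_in[OF xy(1)] by auto
  from inT_cases[OF xs(1)] obtain d1 where x: "x = (p, DelT, d1)" "d1 < length (D p)"
    using Mok_M xy(2) by (force simp: Mok_def)
  from inT_cases[OF xs(2)] obtain d2 where y: "y = (p, DelT, d2)" "d2 < length (D p)"
    using Mok_M xy(3) by (force simp: Mok_def)
  have "d1 = dl p a" using W8[OF w(1) x(2)] xy x by simp
  moreover have "d2 = dl p b" using W8[OF w(2) y(2)] xy y by simp
  ultimately show "dl p a < dl p b" using thr_before_iff[of p DelT d1 d2] xs x y xy by simp
next
  assume w: "a \<in> swrites C" "b \<in> swrites C" "wlab a = Some l" "wlab b = Some l" and lt: "dl p a < dl p b"
  note Da = W7[OF w(1), of p] and Db = W7[OF w(2), of p]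
  have s: "(p, DelT, dl p a) \<in> set (LT p)" "(p, DelT, dl p b) \<in> set (LT p)" using Da Db inT_D by auto
  have "before (LT p) (p, DelT, dl p a) (p, DelT, dl p b)" using thr_before[OF s lt] .
  moreover have "top_at M D (p, DelT, dl p a) = TDeliver (wupd a) (Some l)" "top_at M D (p, DelT, dl p b) = TDeliver (wupd b) (Some l)"
    using Da Db w by auto
  ultimately show "del_before M D (LT p) (wupd a) (wupd b) l" unfolding del_before_def by blast
qed

end

lemma label_in: "(\<forall>i j. i < length Ks \<longrightarrow> j < length Ks \<longrightarrow> i \<noteq> j \<longrightarrow> Ks ! i \<inter> Ks ! j = {}) \<Longrightarrow>
   i < length Ks \<Longrightarrow> x \<in> Ks ! i \<Longrightarrow> label Ks x = Some (Suc i)"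
proof -
  assume d: "\<forall>i j. i < length Ks \<longrightarrow> j < length Ks \<longrightarrow> i \<noteq> j \<longrightarrow> Ks ! i \<inter> Ks ! j = {}" and i: "i < length Ks" "x \<in> Ks ! i"
  have "(SOME i'. i' < length Ks \<and> x \<in> Ks ! i') = i"
  proof (rule some_equality)
    show "i < length Ks \<and> x \<in> Ks ! i" using i by simp
    fix i' assume "i' < length Ks \<and> x \<in> Ks ! i'"
    then show "i' = i" using d i by blast
  qed
  then show ?thesis using i unfolding label_def by auto
qed

context SYS begin

lemma PC_ok:
  assumes disj: "\<forall>i j. i < length Ks \<longrightarrow> j < length Ks \<longrightarrow> i \<noteq> j \<longrightarrow> Ks ! i \<inter> Ks ! j = {}"
  shows "PC Ks init C"
proof -
  have 1: "\<forall>p. distinct (LL p) \<and> set (LL p) = sops_of C p \<union> swrites C \<and>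
            valid_seq init (map (sop_at C) (LL p)) \<and>
            (\<forall>a \<in> set (LL p). \<forall>b \<in> set (LL p). sprog a b \<longrightarrow> before (LL p) a b)"
    using LL_distinct LL_set LL_valid LL_prog by blast
  have 2: "\<forall>p q. \<forall>i < length Ks. \<forall>a \<in> swrites_in C (Ks ! i). \<forall>b \<in> swrites_in C (Ks ! i).
            before (LL p) a b \<longleftrightarrow> before (LL q) a b"
  proof (intro allI impI ballI)
  fix p q i a b assume i: "i < length Ks" and a: "a \<in> swrites_in C (Ks ! i)" and b: "b \<in> swrites_in C (Ks ! i)"
  have wa: "a \<in> swrites C" and wb: "b \<in> swrites C" using a b by (auto simp: swrites_in_def)
  have la: "wlab a = Some (Suc i)" using a label_in[OF disj i] by (simp add: swrites_in_def wlab_def)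
  have lb: "wlab b = Some (Suc i)" using b label_in[OF disj i] by (simp add: swrites_in_def wlab_def)
  have "before (LL p) a b \<longleftrightarrow> dl p a < dl p b" using WO[OF wa wb] WO'[OF wa wb] by blast
  also have "\<dots> \<longleftrightarrow> del_before M D (LT p) (wupd a) (wupd b) (Suc i)" using DB[OF wa wb la lb] by simp
  also have "\<dots> \<longleftrightarrow> del_before M D (LT q) (wupd a) (wupd b) (Suc i)" using agree[of "Suc i"] i by simp
  also have "\<dots> \<longleftrightarrow> dl q a < dl q b" using DB[OF wa wb la lb] by simp
  also have "\<dots> \<longleftrightarrow> before (LL q) a b" using WO[OF wa wb] WO'[OF wa wb] by blast
  finally show "before (LL p) a b \<longleftrightarrow> before (LL q) a b" .
  qed
  show ?thesis unfolding PC_def using 1 2 by blast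
qed

end

theorem mainTheorem1:
  fixes tr :: transformation
    and V :: "'var set"
    and Ks :: "'var set list"
    and init :: "'var \<Rightarrow> 'val"
    and P :: "'p::finite \<Rightarrow> ('var,'val) inv list"
    and M D :: "'p \<Rightarrow> ('p,'var,'val) top list"
    and C :: "'p \<Rightarrow> ('var,'val) sop list"
  assumes admissible: "\<forall>p. \<forall>i \<in> set (P p). inv_var i \<in> V"
    and partition: "partition_of_subset Ks V"
    and main_threads: "\<forall>p. main_exec tr Ks p 0 (P p) (M p) (C p)"
    and delivery_threads: "\<forall>p. del_trace p (D p)"
    and pob: "POB (length Ks) init M D"
  shows "PC Ks init C"
proof -
  have "\<forall>p. \<exists>\<rho>. MS tr Ks p 0 (M p) (C p) \<rho>"
  proof
    fix p show "\<exists>\<rho>. MS tr Ks p 0 (M p) (C p) \<rho>" using main_threads by (intro main_MS) blast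
  qed
  then obtain \<rho> where rho: "\<forall>p. MS tr Ks p 0 (M p) (C p) (\<rho> p)" by metis
  obtain LT :: "'p \<Rightarrow> ('p \<times> thr \<times> nat) list" where LT:
       "\<forall>p. distinct (LT p) \<and> set (LT p) = tops_of M D p \<and>
            tvalid init (map (top_at M D) (LT p)) \<and>
            (\<forall>a \<in> set (LT p). \<forall>b \<in> set (LT p). tprog a b \<or> delOrder M D a b \<longrightarrow> before (LT p) a b)"
     "\<forall>p q. \<forall>l \<in> {1..length Ks}. \<forall>u1 u2. del_before M D (LT p) u1 u2 l \<longleftrightarrow> del_before M D (LT q) u1 u2 l"
     "\<forall>p u l. (\<exists>a \<in> all_tops M D. top_at M D a = TBcast u l) \<longleftrightarrow> (\<exists>a \<in> tops_of M D p. top_at M D a = TDeliver u l)"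
    using pob unfolding POB_def by blast
  interpret S: SYS tr Ks init M D C \<rho> LT
  proof
    show "\<And>p. MS tr Ks p 0 (M p) (C p) (\<rho> p)" using rho by blast
    show "\<And>p. del_trace p (D p)" using delivery_threads by blast
    show "\<And>p. distinct (LT p)" using LT(1) by blast
    show "\<And>p. set (LT p) = tops_of M D p" using LT(1) by blast
    show "\<And>p. tvalid init (map (top_at M D) (LT p))" using LT(1) by blast
    show "\<And>p a b. a \<in> set (LT p) \<Longrightarrow> b \<in> set (LT p) \<Longrightarrow> tprog a b \<or> delOrder M D a b \<Longrightarrow> before (LT p) a b"
      using LT(1) by blast
    show "\<And>p q l u1 u2. l \<in> {1..length Ks} \<Longrightarrow> del_before M D (LT p) u1 u2 l \<longleftrightarrow> del_before M D (LT q) u1 u2 l"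
      using LT(2) by blast
    show "\<And>p u l. (\<exists>a \<in> all_tops M D. top_at M D a = TBcast u l) \<longleftrightarrow> (\<exists>a \<in> tops_of M D p. top_at M D a = TDeliver u l)"
      using LT(3) by blast
  qed
  have disj: "\<forall>i j. i < length Ks \<longrightarrow> j < length Ks \<longrightarrow> i \<noteq> j \<longrightarrow> Ks ! i \<inter> Ks ! j = {}"
    using partition unfolding partition_of_subset_def by blast
  show ?thesis by (rule S.PC_ok[OF disj])
qed

end
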